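(* Let $\eta>0$ and let $s<-\frac{1}{2}$ be given. Then there does not exist a time $T>0$ such that the Cauchy problem $$u_t+uu_x+\eta(\mathcal{H}u_x-u_{xx})=0,\qquad u(x,0)=\phi(x),\quad x\in\mathbb{R},$$ admits a unique local solution on the time interval $[0,T]$ and such that the flow map data-solution $\phi\mapsto u(t)$ is $C^2$ at the origin from $H^s(\mathbb{R})$ to $C([0,T];H^s(\mathbb{R}))$.
   Context: $\mathcal{H}$ denotes the Hilbert transform, $\mathcal{H}f=(i\,\mathrm{sgn}(\xi)\widehat{f}(\xi))^{\vee}$. Solutions are understood via the integral formulation $u(t)=S_0(t)\phi-\int_0^t S_0(t-t')[u(t')u_x(t')]\,dt'$, where $S_0(t)f=\big(e^{-\eta(\xi^2-|\xi|)t}\widehat f\big)^{\vee}$ for $t\ge 0$. *)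

theory Defs
  imports "HOL-Analysis.Analysis"
begin

text \<open>Functions on the real line are represented on the Fourier side:
  a (class of a) function v with Fourier transform v hat is stored as the function
  v hat :: real => complex.  Convention: f hat (xi) = integral of exp(-i x xi) f(x) dx,
  so that (f g) hat = (1/(2 pi)) (f hat * g hat) and (f_x) hat = i xi f hat.\<close>

definition hs_norm :: "real \<Rightarrow> (real \<Rightarrow> complex) \<Rightarrow> real" where
  "hs_norm s v = sqrt (LINT \<xi>|lborel. (1 + \<xi>\<^sup>2) powr s * (cmod (v \<xi>))\<^sup>2)"

text \<open>Real-valued Sobolev space H^s(R), Fourier side (elements are representatives;
  the seminorm hs_norm identifies functions equal almost everywhere).\<close>
definition Hs :: "real \<Rightarrow> (real \<Rightarrow> complex) set" where
  "Hs s = {v. v \<in> borel_measurable lborel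
              \<and> integrable lborel (\<lambda>\<xi>. (1 + \<xi>\<^sup>2) powr s * (cmod (v \<xi>))\<^sup>2)
              \<and> (AE \<xi> in lborel. v (- \<xi>) = cnj (v \<xi>))}"

definition CHs :: "real \<Rightarrow> real \<Rightarrow> (real \<Rightarrow> real \<Rightarrow> complex) set" where
  "CHs T s = {w. (\<forall>t\<in>{0..T}. w t \<in> Hs s)
               \<and> (\<forall>t\<in>{0..T}. ((\<lambda>\<tau>. hs_norm s (\<lambda>\<xi>. w \<tau> \<xi> - w t \<xi>)) \<longlongrightarrow> 0) (at t within {0..T}))}"

definition chs_norm :: "real \<Rightarrow> real \<Rightarrow> (real \<Rightarrow> real \<Rightarrow> complex) \<Rightarrow> real" where
  "chs_norm T s w = (SUP t\<in>{0..T}. hs_norm s (w t))"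

text \<open>Bounded real-linear operators H^s -> C([0,T];H^s) (linearity modulo null elements).\<close>
definition bdd_lin_op :: "real \<Rightarrow> real \<Rightarrow> ((real \<Rightarrow> complex) \<Rightarrow> real \<Rightarrow> real \<Rightarrow> complex) \<Rightarrow> bool" where
  "bdd_lin_op s T L \<longleftrightarrow>
     (\<forall>h\<in>Hs s. L h \<in> CHs T s)
   \<and> (\<forall>h\<in>Hs s. \<forall>g\<in>Hs s. \<forall>a b :: real.
        chs_norm T s (\<lambda>t \<xi>. L (\<lambda>\<zeta>. a *\<^sub>R h \<zeta> + b *\<^sub>R g \<zeta>) t \<xi> - (a *\<^sub>R L h t \<xi> + b *\<^sub>R L g t \<xi>)) = 0)
   \<and> (\<exists>C. \<forall>h\<in>Hs s. chs_norm T s (L h) \<le> C * hs_norm s h)"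

definition frechet_deriv_at ::
  "real \<Rightarrow> real \<Rightarrow> ((real \<Rightarrow> complex) \<Rightarrow> real \<Rightarrow> real \<Rightarrow> complex) \<Rightarrow> (real \<Rightarrow> complex)
     \<Rightarrow> ((real \<Rightarrow> complex) \<Rightarrow> real \<Rightarrow> real \<Rightarrow> complex) \<Rightarrow> bool" where
  "frechet_deriv_at s T F \<phi> L \<longleftrightarrow>
     bdd_lin_op s T L
   \<and> (\<forall>\<epsilon>>0. \<exists>\<delta>>0. \<forall>h\<in>Hs s. hs_norm s h < \<delta> \<longrightarrow>
        chs_norm T s (\<lambda>t \<xi>. F (\<lambda>\<zeta>. \<phi> \<zeta> + h \<zeta>) t \<xi> - F \<phi> t \<xi> - L h t \<xi>) \<le> \<epsilon> * hs_norm s h)"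

text \<open>F is twice Frechet differentiable at the origin: F is Frechet differentiable on a ball
  around 0 with derivative DF, and DF (as a map into bounded operators, operator norm)
  is Frechet differentiable at 0 with derivative the bounded bilinear map D2.\<close>
definition twice_frechet_at_zero ::
  "real \<Rightarrow> real \<Rightarrow> ((real \<Rightarrow> complex) \<Rightarrow> real \<Rightarrow> real \<Rightarrow> complex) \<Rightarrow> bool" where
  "twice_frechet_at_zero s T F \<longleftrightarrow>
    (\<exists>r>0. \<exists>DF D2.
        (\<forall>\<phi>\<in>Hs s. hs_norm s \<phi> < r \<longrightarrow> frechet_deriv_at s T F \<phi> (DF \<phi>))
      \<and> (\<forall>h\<in>Hs s. bdd_lin_op s T (D2 h))
      \<and> (\<forall>h\<in>Hs s. \<forall>h'\<in>Hs s. \<forall>g\<in>Hs s. \<forall>a b :: real.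
           chs_norm T s (\<lambda>t \<xi>. D2 (\<lambda>\<zeta>. a *\<^sub>R h \<zeta> + b *\<^sub>R h' \<zeta>) g t \<xi>
                                 - (a *\<^sub>R D2 h g t \<xi> + b *\<^sub>R D2 h' g t \<xi>)) = 0)
      \<and> (\<exists>C. \<forall>h\<in>Hs s. \<forall>g\<in>Hs s. chs_norm T s (D2 h g) \<le> C * hs_norm s h * hs_norm s g)
      \<and> (\<forall>\<epsilon>>0. \<exists>\<delta>>0. \<forall>h\<in>Hs s. hs_norm s h < \<delta> \<longrightarrow>
           (\<forall>g\<in>Hs s. chs_norm T s (\<lambda>t \<xi>. DF h g t \<xi> - DF (\<lambda>_. 0) g t \<xi> - D2 h g t \<xi>)
                        \<le> \<epsilon> * hs_norm s h * hs_norm s g)))"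

text \<open>Fourier transform of the nonlinearity u u_x = (1/2)(u^2)_x at time tau:
  (i xi / (4 pi)) * (w tau hat convolved with itself)(xi).\<close>
definition nonlin :: "(real \<Rightarrow> real \<Rightarrow> complex) \<Rightarrow> real \<Rightarrow> real \<Rightarrow> complex" where
  "nonlin w \<tau> \<xi> = (\<i> * complex_of_real \<xi> / complex_of_real (4 * pi))
                     * (LINT \<zeta>|lborel. w \<tau> (\<xi> - \<zeta>) * w \<tau> \<zeta>)"

definition S0sym :: "real \<Rightarrow> real \<Rightarrow> real \<Rightarrow> complex" where
  "S0sym \<eta> t \<xi> = complex_of_real (exp (- \<eta> * (\<xi>\<^sup>2 - \<bar>\<xi>\<bar>) * t))"

definition mild_solution ::
  "real \<Rightarrow> real \<Rightarrow> (real \<Rightarrow> complex) \<Rightarrow> (real \<Rightarrow> real \<Rightarrow> complex) \<Rightarrow> bool" where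
  "mild_solution \<eta> T \<phi> w \<longleftrightarrow>
    (\<forall>t\<in>{0..T}. AE \<xi> in lborel.
        (\<forall>\<tau>\<in>{0..t}. integrable lborel (\<lambda>\<zeta>. w \<tau> (\<xi> - \<zeta>) * w \<tau> \<zeta>))
      \<and> set_integrable lborel {0..t} (\<lambda>\<tau>. S0sym \<eta> (t - \<tau>) \<xi> * nonlin w \<tau> \<xi>)
      \<and> w t \<xi> = S0sym \<eta> t \<xi> * \<phi> \<xi> - (LINT \<tau>:{0..t}|lborel. S0sym \<eta> (t - \<tau>) \<xi> * nonlin w \<tau> \<xi>))"

definition smooth_solution ::
  "real \<Rightarrow> real \<Rightarrow> (real \<Rightarrow> complex) \<Rightarrow> (real \<Rightarrow> real \<Rightarrow> complex) \<Rightarrow> bool" where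
  "smooth_solution \<eta> T \<phi> w \<longleftrightarrow> (\<forall>\<sigma>. w \<in> CHs T \<sigma>) \<and> mild_solution \<eta> T \<phi> w"

definition flow_map :: "real \<Rightarrow> real \<Rightarrow> real \<Rightarrow> ((real \<Rightarrow> complex) \<Rightarrow> real \<Rightarrow> real \<Rightarrow> complex) \<Rightarrow> bool" where
  "flow_map \<eta> s T F \<longleftrightarrow>
    (\<exists>r>0. (\<forall>\<phi>\<in>Hs s. hs_norm s \<phi> < r \<longrightarrow> F \<phi> \<in> CHs T s)
         \<and> (\<forall>\<phi>. (\<forall>\<sigma>. \<phi> \<in> Hs \<sigma>) \<and> hs_norm s \<phi> < r \<longrightarrow>
               smooth_solution \<eta> T \<phi> (F \<phi>)
             \<and> (\<forall>w. smooth_solution \<eta> T \<phi> w \<longrightarrow>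
                    (\<forall>t\<in>{0..T}. hs_norm s (\<lambda>\<xi>. w t \<xi> - F \<phi> t \<xi>) = 0))))"

end

theory Submission
  imports Defs "HOL-Probability.Sinc_Integral"
begin

definition om :: "real \<Rightarrow> real \<Rightarrow> real" where "om s \<xi> = (1 + \<xi>\<^sup>2) powr s"

definition W :: "real \<Rightarrow> (real \<Rightarrow> complex) \<Rightarrow> bool" where
  "W s v \<longleftrightarrow> v \<in> borel_measurable lborel \<and> integrable lborel (\<lambda>\<xi>. om s \<xi> * (cmod (v \<xi>))\<^sup>2)"

definition pr :: "real \<Rightarrow> (real \<Rightarrow> complex) \<Rightarrow> (real \<Rightarrow> complex) \<Rightarrow> real" where
  "pr s v \<psi> = (LINT \<xi>|lborel. om s \<xi> * Re (v \<xi> * cnj (\<psi> \<xi>)))"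

lemma cnj_measurable[measurable]:
  assumes [measurable]: "f \<in> borel_measurable M" shows "(\<lambda>x. cnj (f x)) \<in> borel_measurable M"
proof -
  have e: "(\<lambda>x. cnj (f x)) = (\<lambda>x. complex_of_real (Re (f x)) - \<i> * complex_of_real (Im (f x)))"
    by (auto simp: complex_eq_iff)
  show ?thesis unfolding e by measurable
qed

lemma half_le: "(a::real) \<le> b / 2 \<Longrightarrow> 0 \<le> b \<Longrightarrow> a \<le> b" by linarith

lemma om_pos[simp]: "om s \<xi> > 0" proof -
  have "1 + \<xi>\<^sup>2 \<noteq> 0" using zero_le_power2[of \<xi>] by linarith
  then show ?thesis unfolding om_def by simp
qed
lemma om_nn[simp]: "om s \<xi> \<ge> 0" using om_pos[of s \<xi>] by linarith
lemma om_0[simp]: "om 0 \<xi> = 1" proof -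
  have "1 + \<xi>\<^sup>2 \<noteq> 0" using zero_le_power2[of \<xi>] by linarith
  then show ?thesis unfolding om_def by simp
qed
lemma om_le1: "s \<le> 0 \<Longrightarrow> om s \<xi> \<le> 1"
  using powr_mono[of s 0 "1 + \<xi>\<^sup>2"] om_0[of \<xi>] unfolding om_def by simp

lemma om_meas[measurable]: "om s \<in> borel_measurable lborel" unfolding om_def by measurable

lemma hs_norm_om: "hs_norm s v = sqrt (LINT \<xi>|lborel. om s \<xi> * (cmod (v \<xi>))\<^sup>2)"
  unfolding hs_norm_def om_def by simp

lemma hs_norm_nn[simp]: "hs_norm s v \<ge> 0"
  unfolding hs_norm_om by (auto intro!: integral_nonneg_AE)

lemma hs_norm_sq: "(hs_norm s v)\<^sup>2 = (LINT \<xi>|lborel. om s \<xi> * (cmod (v \<xi>))\<^sup>2)"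
  unfolding hs_norm_om by (auto intro!: integral_nonneg_AE)

lemma Hs_W: "v \<in> Hs s \<Longrightarrow> W s v" unfolding Hs_def W_def om_def by auto

lemma W_dom:
  assumes v[measurable]: "v \<in> borel_measurable lborel" and g: "W s g" and c: "c \<ge> 0"
    and b: "AE \<xi> in lborel. cmod (v \<xi>) \<le> c * cmod (g \<xi>)"
  shows "W s v" "hs_norm s v \<le> c * hs_norm s g"
proof -
  have gm[measurable]: "g \<in> borel_measurable lborel" and gi: "integrable lborel (\<lambda>\<xi>. om s \<xi> * (cmod (g \<xi>))\<^sup>2)"
    using g unfolding W_def by auto
  have b2: "AE \<xi> in lborel. om s \<xi> * (cmod (v \<xi>))\<^sup>2 \<le> c\<^sup>2 * (om s \<xi> * (cmod (g \<xi>))\<^sup>2)"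
    using b
  proof eventually_elim
    case (elim \<xi>)
    have "(cmod (v \<xi>))\<^sup>2 \<le> (c * cmod (g \<xi>))\<^sup>2" using elim by (intro power_mono) auto
    then show ?case using om_nn[of s \<xi>] by (auto simp: power_mult_distrib mult_left_mono algebra_simps)
  qed
  have i: "integrable lborel (\<lambda>\<xi>. om s \<xi> * (cmod (v \<xi>))\<^sup>2)"
    apply (rule Bochner_Integration.integrable_bound[of _ "\<lambda>\<xi>. c\<^sup>2 * (om s \<xi> * (cmod (g \<xi>))\<^sup>2)"])
    using gi apply simp
     apply measurable
    using b2 by eventually_elim auto
  then show "W s v" unfolding W_def by simp
  have "(LINT \<xi>|lborel. om s \<xi> * (cmod (v \<xi>))\<^sup>2) \<le> (LINT \<xi>|lborel. c\<^sup>2 * (om s \<xi> * (cmod (g \<xi>))\<^sup>2))"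
    by (intro integral_mono_AE i b2) (use gi in auto)
  also have "\<dots> = c\<^sup>2 * (hs_norm s g)\<^sup>2" by (simp add: hs_norm_sq)
  finally have "(hs_norm s v)\<^sup>2 \<le> (c * hs_norm s g)\<^sup>2" by (simp add: hs_norm_sq power_mult_distrib)
  then show "hs_norm s v \<le> c * hs_norm s g"
    using c by (meson hs_norm_nn mult_nonneg_nonneg power2_le_imp_le)
qed

lemma W_add: assumes "W s v" "W s w" shows "W s (\<lambda>\<xi>. v \<xi> + w \<xi>)"
proof -
  have [measurable]: "v \<in> borel_measurable lborel" "w \<in> borel_measurable lborel" using assms unfolding W_def by auto
  have i: "integrable lborel (\<lambda>\<xi>. 2 * (om s \<xi> * (cmod (v \<xi>))\<^sup>2) + 2 * (om s \<xi> * (cmod (w \<xi>))\<^sup>2))"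
    using assms unfolding W_def by auto
  have "integrable lborel (\<lambda>\<xi>. om s \<xi> * (cmod (v \<xi> + w \<xi>))\<^sup>2)"
  proof (rule Bochner_Integration.integrable_bound[OF i], measurable)
    show "AE x in lborel. norm (om s x * (cmod (v x + w x))\<^sup>2) \<le> norm (2 * (om s x * (cmod (v x))\<^sup>2) + 2 * (om s x * (cmod (w x))\<^sup>2))"
    proof (intro AE_I2)
      fix x
      have "(cmod (v x + w x))\<^sup>2 \<le> (cmod (v x) + cmod (w x))\<^sup>2" by (intro power_mono norm_triangle_ineq) auto
      also have "\<dots> \<le> 2 * (cmod (v x))\<^sup>2 + 2 * (cmod (w x))\<^sup>2"
      proof -
        have "(cmod (v x) + cmod (w x))\<^sup>2 + (cmod (v x) - cmod (w x))\<^sup>2 = 2 * (cmod (v x))\<^sup>2 + 2 * (cmod (w x))\<^sup>2"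
          by (simp add: power2_eq_square algebra_simps)
        moreover have "(cmod (v x) - cmod (w x))\<^sup>2 \<ge> 0" by simp
        ultimately show ?thesis by linarith
      qed
      finally have "om s x * (cmod (v x + w x))\<^sup>2 \<le> om s x * (2 * (cmod (v x))\<^sup>2 + 2 * (cmod (w x))\<^sup>2)"
        by (intro mult_left_mono) auto
      then show "norm (om s x * (cmod (v x + w x))\<^sup>2) \<le> norm (2 * (om s x * (cmod (v x))\<^sup>2) + 2 * (om s x * (cmod (w x))\<^sup>2))"
        by (simp add: algebra_simps)
    qed
  qed
  then show ?thesis unfolding W_def by simp
qed

lemma W_scale: assumes "W s v" shows "W s (\<lambda>\<xi>. c * v \<xi>)" "hs_norm s (\<lambda>\<xi>. c * v \<xi>) = cmod c * hs_norm s v"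
proof -
  have [measurable]: "v \<in> borel_measurable lborel" using assms unfolding W_def by auto
  have "W s (\<lambda>\<xi>. c * v \<xi>) \<and> hs_norm s (\<lambda>\<xi>. c * v \<xi>) \<le> cmod c * hs_norm s v"
    using W_dom[of "\<lambda>\<xi>. c * v \<xi>" s v "cmod c"] assms by (auto simp: norm_mult)
  then show "W s (\<lambda>\<xi>. c * v \<xi>)" by simp
  have "(hs_norm s (\<lambda>\<xi>. c * v \<xi>))\<^sup>2 = (cmod c * hs_norm s v)\<^sup>2"
    unfolding hs_norm_sq power_mult_distrib
    by (simp add: norm_mult power_mult_distrib algebra_simps flip: integral_mult_right_zero)
  then show "hs_norm s (\<lambda>\<xi>. c * v \<xi>) = cmod c * hs_norm s v"
    by (metis hs_norm_nn norm_ge_zero power2_eq_imp_eq zero_le_mult_iff)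
qed

lemma W_scaleR: assumes "W s v" shows "W s (\<lambda>\<xi>. c *\<^sub>R v \<xi>)" "hs_norm s (\<lambda>\<xi>. c *\<^sub>R v \<xi>) = \<bar>c\<bar> * hs_norm s v"
  using W_scale[OF assms, of "complex_of_real c"] by (simp_all add: scaleR_conv_of_real)

lemma W_minus: assumes "W s v" shows "W s (\<lambda>\<xi>. - v \<xi>)" "hs_norm s (\<lambda>\<xi>. - v \<xi>) = hs_norm s v"
  using W_scale[OF assms, of "-1"] by simp_all

lemma W_diff: assumes "W s v" "W s w" shows "W s (\<lambda>\<xi>. v \<xi> - w \<xi>)"
  using W_add[OF assms(1) W_minus(1)[OF assms(2)]] by simp

lemma W_zero[simp]: "W s (\<lambda>\<xi>. 0)" unfolding W_def by simp
lemma hs_norm_zero[simp]: "hs_norm s (\<lambda>\<xi>. 0) = 0" unfolding hs_norm_om by simp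

lemma cs_aux:
  fixes X A B :: real
  assumes A: "A \<ge> 0" and B: "B \<ge> 0" and H: "\<And>l. l > 0 \<Longrightarrow> X \<le> (l * A + B / l) / 2"
  shows "X \<le> sqrt A * sqrt B"
proof (rule field_le_epsilon)
  fix e :: real assume e: "e > 0"
  define a where "a = sqrt A" define b where "b = sqrt B"
  have a: "a \<ge> 0" "a\<^sup>2 = A" and b: "b \<ge> 0" "b\<^sup>2 = B" using A B by (auto simp: a_def b_def)
  define d where "d = min 1 (e / (a + b + 1))"
  have d: "d > 0" "d \<le> 1" using e a b by (auto simp: d_def)
  have "d \<le> e / (a + b + 1)" by (simp add: d_def)
  then have "d * (a + b + 1) \<le> e / (a + b + 1) * (a + b + 1)" using a b by (intro mult_right_mono) auto
  then have d3: "d * (a + b + 1) \<le> e" using a b by simp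
  define l where "l = (b + d) / (a + d)"
  have l: "l > 0" using a b d by (auto simp: l_def)
  have 1: "l * A \<le> (b + d) * (a + d)"
  proof -
    have "(a + d)\<^sup>2 = A + (2 * a * d + d * d)" using a by (simp add: power2_eq_square algebra_simps)
    moreover have "2 * a * d + d * d \<ge> 0" using a d by simp
    ultimately have "A \<le> (a + d)\<^sup>2" by linarith
    then have "l * A \<le> l * (a + d)\<^sup>2" using l by (intro mult_left_mono) auto
    also have "\<dots> = (b + d) * (a + d)" using a d by (simp add: l_def power2_eq_square)
    finally show ?thesis .
  qed
  have 2: "B / l \<le> (b + d) * (a + d)"
  proof -
    have "(b + d)\<^sup>2 = B + (2 * b * d + d * d)" using b by (simp add: power2_eq_square algebra_simps)
    moreover have "2 * b * d + d * d \<ge> 0" using b d by simp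
    ultimately have "B \<le> (b + d)\<^sup>2" by linarith
    then have "B / l \<le> (b + d)\<^sup>2 / l" using l by (intro divide_right_mono) auto
    also have "\<dots> = (b + d) * (a + d)" using a b d by (simp add: l_def power2_eq_square field_simps)
    finally show ?thesis .
  qed
  define M where "M = (b + d) * (a + d)"
  have s1: "l * A + B / l \<le> M + M" unfolding M_def by (rule add_mono[OF 1 2])
  have "(l * A + B / l) / 2 \<le> (M + M) / 2" by (rule divide_right_mono[OF s1]) simp
  then have "X \<le> (b + d) * (a + d)" using H[OF l] unfolding M_def[symmetric] by simp
  also have "\<dots> = a * b + d * (a + b + d)" by (simp add: algebra_simps)
  also have "\<dots> \<le> a * b + d * (a + b + 1)" using d a b by (intro add_left_mono mult_left_mono) auto
  also have "\<dots> \<le> a * b + e" using d3 by linarith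
  finally show "X \<le> sqrt A * sqrt B + e" by (simp add: a_def b_def)
qed

lemma W_pr:
  assumes v: "W s v" and w: "W s w"
  shows "integrable lborel (\<lambda>\<xi>. om s \<xi> * Re (v \<xi> * cnj (w \<xi>)))"
    "\<bar>pr s v w\<bar> \<le> hs_norm s v * hs_norm s w"
proof -
  have [measurable]: "v \<in> borel_measurable lborel" "w \<in> borel_measurable lborel" using assms unfolding W_def by auto
  have iv: "integrable lborel (\<lambda>\<xi>. om s \<xi> * (cmod (v \<xi>))\<^sup>2)" and iw: "integrable lborel (\<lambda>\<xi>. om s \<xi> * (cmod (w \<xi>))\<^sup>2)"
    using assms unfolding W_def by auto
  have pt: "om s \<xi> * \<bar>Re (v \<xi> * cnj (w \<xi>))\<bar> \<le> (l * (om s \<xi> * (cmod (v \<xi>))\<^sup>2) + (om s \<xi> * (cmod (w \<xi>))\<^sup>2) / l) / 2"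
    if l: "l > 0" for l \<xi>
  proof -
    have r1: "\<bar>Re (v \<xi> * cnj (w \<xi>))\<bar> \<le> cmod (v \<xi> * cnj (w \<xi>))" by (rule abs_Re_le_cmod)
    have r2: "cmod (v \<xi> * cnj (w \<xi>)) = cmod (v \<xi>) * cmod (w \<xi>)" by (simp add: norm_mult)
    have r3: "cmod (v \<xi>) * cmod (w \<xi>) \<le> (l * (cmod (v \<xi>))\<^sup>2 + (cmod (w \<xi>))\<^sup>2 / l) / 2"
    proof -
      have "0 \<le> (l * cmod (v \<xi>) - cmod (w \<xi>))\<^sup>2" by simp
      then have "2 * l * (cmod (v \<xi>) * cmod (w \<xi>)) \<le> l * (l * (cmod (v \<xi>))\<^sup>2) + (cmod (w \<xi>))\<^sup>2"
        by (simp add: power2_eq_square algebra_simps)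
      then have "2 * (cmod (v \<xi>) * cmod (w \<xi>)) \<le> (l * (l * (cmod (v \<xi>))\<^sup>2) + (cmod (w \<xi>))\<^sup>2) / l"
        using l by (simp add: field_simps)
      also have "\<dots> = l * (cmod (v \<xi>))\<^sup>2 + (cmod (w \<xi>))\<^sup>2 / l" using l by (simp add: field_simps)
      finally show ?thesis by simp
    qed
    have "\<bar>Re (v \<xi> * cnj (w \<xi>))\<bar> \<le> (l * (cmod (v \<xi>))\<^sup>2 + (cmod (w \<xi>))\<^sup>2 / l) / 2"
      using r1 r2 r3 by linarith
    then have "om s \<xi> * \<bar>Re (v \<xi> * cnj (w \<xi>))\<bar> \<le> om s \<xi> * ((l * (cmod (v \<xi>))\<^sup>2 + (cmod (w \<xi>))\<^sup>2 / l) / 2)"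
      by (intro mult_left_mono) auto
    then show ?thesis by (simp add: algebra_simps add_divide_distrib)
  qed
  have ib: "integrable lborel (\<lambda>\<xi>. (om s \<xi> * (cmod (v \<xi>))\<^sup>2) + (om s \<xi> * (cmod (w \<xi>))\<^sup>2))"
    using iv iw by auto
  show i: "integrable lborel (\<lambda>\<xi>. om s \<xi> * Re (v \<xi> * cnj (w \<xi>)))"
  proof (rule Bochner_Integration.integrable_bound[OF ib])
    show "(\<lambda>\<xi>. om s \<xi> * Re (v \<xi> * cnj (w \<xi>))) \<in> borel_measurable lborel" by measurable
    show "AE x in lborel. norm (om s x * Re (v x * cnj (w x))) \<le> norm (om s x * (cmod (v x))\<^sup>2 + om s x * (cmod (w x))\<^sup>2)"
    proof (intro AE_I2)
    fix x
    have "om s x * \<bar>Re (v x * cnj (w x))\<bar> \<le> (1 * (om s x * (cmod (v x))\<^sup>2) + (om s x * (cmod (w x))\<^sup>2) / 1) / 2"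
      by (rule pt) simp
    moreover have "0 \<le> om s x * \<bar>Re (v x * cnj (w x))\<bar>" by simp
    moreover have "0 \<le> om s x * (cmod (v x))\<^sup>2 + om s x * (cmod (w x))\<^sup>2" by simp
    ultimately show "norm (om s x * Re (v x * cnj (w x))) \<le> norm (om s x * (cmod (v x))\<^sup>2 + om s x * (cmod (w x))\<^sup>2)"
      unfolding real_norm_def abs_mult by (simp only: abs_of_nonneg om_nn mult_1 div_by_1) (rule half_le)
  qed
  qed
  have ia: "integrable lborel (\<lambda>\<xi>. om s \<xi> * \<bar>Re (v \<xi> * cnj (w \<xi>))\<bar>)"
    using integrable_abs[OF i] by (simp add: abs_mult)
  have "\<bar>pr s v w\<bar> \<le> (LINT \<xi>|lborel. om s \<xi> * \<bar>Re (v \<xi> * cnj (w \<xi>))\<bar>)"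
    unfolding pr_def using integral_abs_bound[of lborel "\<lambda>\<xi>. om s \<xi> * Re (v \<xi> * cnj (w \<xi>))"]
    by (simp add: abs_mult)
  also have "\<dots> \<le> sqrt (LINT \<xi>|lborel. om s \<xi> * (cmod (v \<xi>))\<^sup>2) * sqrt (LINT \<xi>|lborel. om s \<xi> * (cmod (w \<xi>))\<^sup>2)"
  proof (rule cs_aux)
    show "0 \<le> (LINT \<xi>|lborel. om s \<xi> * (cmod (v \<xi>))\<^sup>2)" "0 \<le> (LINT \<xi>|lborel. om s \<xi> * (cmod (w \<xi>))\<^sup>2)"
      by (auto intro!: integral_nonneg_AE)
    fix l :: real assume l: "l > 0"
    have "(LINT \<xi>|lborel. om s \<xi> * \<bar>Re (v \<xi> * cnj (w \<xi>))\<bar>) \<le>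
       (LINT \<xi>|lborel. (l * (om s \<xi> * (cmod (v \<xi>))\<^sup>2) + (om s \<xi> * (cmod (w \<xi>))\<^sup>2) / l) / 2)"
      by (intro integral_mono ia pt l) (use iv iw in auto)
    also have "\<dots> = (l * (LINT \<xi>|lborel. om s \<xi> * (cmod (v \<xi>))\<^sup>2) + (LINT \<xi>|lborel. om s \<xi> * (cmod (w \<xi>))\<^sup>2) / l) / 2"
      using iv iw by simp
    finally show "(LINT \<xi>|lborel. om s \<xi> * \<bar>Re (v \<xi> * cnj (w \<xi>))\<bar>) \<le> \<dots>" .
  qed
  finally show "\<bar>pr s v w\<bar> \<le> hs_norm s v * hs_norm s w" by (simp add: hs_norm_om)
qed

lemma pr_self: "W s v \<Longrightarrow> pr s v v = (hs_norm s v)\<^sup>2"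
  unfolding pr_def hs_norm_sq
  by (intro Bochner_Integration.integral_cong refl) (simp add: complex_mult_cnj cmod_def)

lemma pr_add: "W s v \<Longrightarrow> W s w \<Longrightarrow> W s \<psi> \<Longrightarrow> pr s (\<lambda>\<xi>. v \<xi> + w \<xi>) \<psi> = pr s v \<psi> + pr s w \<psi>"
  unfolding pr_def using W_pr(1)[of s v \<psi>] W_pr(1)[of s w \<psi>]
  by (simp add: distrib_left distrib_right flip: Bochner_Integration.integral_add)

lemma pr_diff: "W s v \<Longrightarrow> W s w \<Longrightarrow> W s \<psi> \<Longrightarrow> pr s (\<lambda>\<xi>. v \<xi> - w \<xi>) \<psi> = pr s v \<psi> - pr s w \<psi>"
  unfolding pr_def using W_pr(1)[of s v \<psi>] W_pr(1)[of s w \<psi>]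
  by (simp add: left_diff_distrib right_diff_distrib flip: Bochner_Integration.integral_diff)

lemma pr_scaleR: "pr s (\<lambda>\<xi>. c *\<^sub>R v \<xi>) \<psi> = c * pr s v \<psi>"
  unfolding pr_def by (simp add: scaleR_conv_of_real algebra_simps flip: integral_mult_right_zero)

lemma hs_triangle: assumes "W s v" "W s w" shows "hs_norm s (\<lambda>\<xi>. v \<xi> + w \<xi>) \<le> hs_norm s v + hs_norm s w"
proof -
  let ?u = "\<lambda>\<xi>. v \<xi> + w \<xi>"
  have u: "W s ?u" using W_add assms by blast
  have "(hs_norm s ?u)\<^sup>2 = pr s v ?u + pr s w ?u" using pr_self[OF u] pr_add[OF assms u] by simp
  also have "\<dots> \<le> hs_norm s v * hs_norm s ?u + hs_norm s w * hs_norm s ?u"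
    using W_pr(2)[OF assms(1) u] W_pr(2)[OF assms(2) u] by linarith
  finally have *: "hs_norm s ?u * hs_norm s ?u \<le> (hs_norm s v + hs_norm s w) * hs_norm s ?u"
    by (simp add: power2_eq_square algebra_simps)
  show ?thesis
  proof (cases "hs_norm s ?u = 0")
    case True then show ?thesis by (simp add: add_nonneg_nonneg)
  next
    case False then have "hs_norm s ?u > 0" using hs_norm_nn[of s ?u] by linarith
    then show ?thesis using * by (simp add: mult_right_le_imp_le)
  qed
qed

lemma hs_triangle_diff: assumes "W s v" "W s w" shows "hs_norm s (\<lambda>\<xi>. v \<xi> - w \<xi>) \<le> hs_norm s v + hs_norm s w"
  using hs_triangle[OF assms(1) W_minus(1)[OF assms(2)]] W_minus(2)[OF assms(2)] by simp

lemma pr_zero_norm: "W s v \<Longrightarrow> W s \<psi> \<Longrightarrow> hs_norm s v = 0 \<Longrightarrow> pr s v \<psi> = 0"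
  using W_pr(2)[of s v \<psi>] by simp

lemma W0_Ws: assumes "W 0 v" "s \<le> 0" shows "W s v" "hs_norm s v \<le> hs_norm 0 v"
proof -
  have [measurable]: "v \<in> borel_measurable lborel" and i: "integrable lborel (\<lambda>\<xi>. (cmod (v \<xi>))\<^sup>2)"
    using assms unfolding W_def by auto
  have b: "om s \<xi> * (cmod (v \<xi>))\<^sup>2 \<le> (cmod (v \<xi>))\<^sup>2" for \<xi>
    using om_le1[OF assms(2), of \<xi>] by (simp add: mult_left_le_one_le)
  have i2: "integrable lborel (\<lambda>\<xi>. om s \<xi> * (cmod (v \<xi>))\<^sup>2)"
    by (rule Bochner_Integration.integrable_bound[OF i]) (use b in auto)
  then show "W s v" unfolding W_def by simp
  have "(LINT \<xi>|lborel. om s \<xi> * (cmod (v \<xi>))\<^sup>2) \<le> (LINT \<xi>|lborel. (cmod (v \<xi>))\<^sup>2)"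
    by (intro integral_mono i i2 b)
  then show "hs_norm s v \<le> hs_norm 0 v" unfolding hs_norm_om by simp
qed

lemma CHs_W: "w \<in> CHs T s \<Longrightarrow> t \<in> {0..T} \<Longrightarrow> W s (w t)"
  unfolding CHs_def using Hs_W by blast

lemma hs_norm_cont_aux:
  assumes "W s a" "W s b"
  shows "\<bar>hs_norm s a - hs_norm s b\<bar> \<le> hs_norm s (\<lambda>\<xi>. a \<xi> - b \<xi>)"
proof -
  have d1: "W s (\<lambda>\<xi>. a \<xi> - b \<xi>)" using W_diff assms by blast
  have d2: "W s (\<lambda>\<xi>. b \<xi> - a \<xi>)" using W_diff assms by blast
  have "hs_norm s a \<le> hs_norm s b + hs_norm s (\<lambda>\<xi>. a \<xi> - b \<xi>)"
    using hs_triangle[OF assms(2) d1] by simp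
  moreover have "hs_norm s b \<le> hs_norm s a + hs_norm s (\<lambda>\<xi>. b \<xi> - a \<xi>)"
    using hs_triangle[OF assms(1) d2] by simp
  moreover have "hs_norm s (\<lambda>\<xi>. b \<xi> - a \<xi>) = hs_norm s (\<lambda>\<xi>. a \<xi> - b \<xi>)"
    using W_minus(2)[OF d1] by simp
  ultimately show ?thesis by linarith
qed

lemma CHs_bdd:
  assumes w: "w \<in> CHs T s" shows "\<exists>B. \<forall>t\<in>{0..T}. hs_norm s (w t) \<le> B"
proof -
  let ?g = "\<lambda>t. hs_norm s (w t)"
  have "continuous_on {0..T} ?g"
    unfolding continuous_on_eq_continuous_within
  proof
    fix t assume t: "t \<in> {0..T}"
    have lim: "((\<lambda>\<tau>. hs_norm s (\<lambda>\<xi>. w \<tau> \<xi> - w t \<xi>)) \<longlongrightarrow> 0) (at t within {0..T})"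
      using w t unfolding CHs_def by blast
    have "(?g \<longlongrightarrow> ?g t) (at t within {0..T})"
    proof (rule metric_tendsto_imp_tendsto[OF lim])
      show "\<forall>\<^sub>F x in at t within {0..T}. dist (?g x) (?g t) \<le> dist (hs_norm s (\<lambda>\<xi>. w x \<xi> - w t \<xi>)) 0"
        unfolding eventually_at_filter
        using hs_norm_cont_aux[OF CHs_W[OF w] CHs_W[OF w t]] by (auto simp: dist_real_def)
    qed
    then show "continuous (at t within {0..T}) ?g" unfolding continuous_within .
  qed
  then have "bounded (?g ` {0..T})" by (intro compact_imp_bounded compact_continuous_image) auto
  then obtain B where "\<forall>x\<in>?g ` {0..T}. norm x \<le> B" unfolding bounded_iff by blast
  then show ?thesis by force
qed

lemma chs_upper:
  assumes "\<forall>t\<in>{0..T}. hs_norm s (X t) \<le> B" "t \<in> {0..T}"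
  shows "hs_norm s (X t) \<le> chs_norm T s X"
  unfolding chs_norm_def using assms by (intro cSUP_upper) (auto intro!: bdd_aboveI2)

lemma W_reflect:
  assumes "W 0 f" shows "W 0 (\<lambda>\<zeta>. f (x - \<zeta>))" "hs_norm 0 (\<lambda>\<zeta>. f (x - \<zeta>)) = hs_norm 0 f"
proof -
  have [measurable]: "f \<in> borel_measurable lborel" and i: "integrable lborel (\<lambda>\<xi>. (cmod (f \<xi>))\<^sup>2)"
    using assms unfolding W_def by auto
  have "integrable lborel (\<lambda>\<zeta>. (cmod (f (x + (-1) * \<zeta>)))\<^sup>2)"
    by (rule lborel_integrable_real_affine[OF i]) simp
  then show "W 0 (\<lambda>\<zeta>. f (x - \<zeta>))" unfolding W_def by simp measurable
  have "(LINT \<xi>|lborel. (cmod (f \<xi>))\<^sup>2) = \<bar>-1\<bar> *\<^sub>R (LINT \<zeta>|lborel. (cmod (f (x + (-1) * \<zeta>)))\<^sup>2)"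
    by (rule lborel_integral_real_affine) simp
  then show "hs_norm 0 (\<lambda>\<zeta>. f (x - \<zeta>)) = hs_norm 0 f" unfolding hs_norm_om by simp
qed

lemma W_abs: assumes "W s f" shows "W s (\<lambda>\<zeta>. complex_of_real (cmod (f \<zeta>)))" "hs_norm s (\<lambda>\<zeta>. complex_of_real (cmod (f \<zeta>))) = hs_norm s f"
  using assms unfolding W_def hs_norm_om by auto

lemma conv_bound:
  assumes f: "W 0 f" and g: "W 0 g"
  shows "integrable lborel (\<lambda>\<zeta>. f (x - \<zeta>) * g \<zeta>)"
    "cmod (LINT \<zeta>|lborel. f (x - \<zeta>) * g \<zeta>) \<le> hs_norm 0 f * hs_norm 0 g"
proof -
  have f'[measurable]: "(\<lambda>\<zeta>. f (x - \<zeta>)) \<in> borel_measurable lborel" and g'[measurable]: "g \<in> borel_measurable lborel"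
    using W_reflect(1)[OF f, of x] g unfolding W_def by auto
  have F: "W 0 (\<lambda>\<zeta>. complex_of_real (cmod (f (x - \<zeta>))))" "hs_norm 0 (\<lambda>\<zeta>. complex_of_real (cmod (f (x - \<zeta>)))) = hs_norm 0 f"
    using W_abs[OF W_reflect(1)[OF f, of x]] W_reflect(2)[OF f, of x] by auto
  have G: "W 0 (\<lambda>\<zeta>. complex_of_real (cmod (g \<zeta>)))" "hs_norm 0 (\<lambda>\<zeta>. complex_of_real (cmod (g \<zeta>))) = hs_norm 0 g"
    using W_abs[OF g] by auto
  have i: "integrable lborel (\<lambda>\<zeta>. cmod (f (x - \<zeta>)) * cmod (g \<zeta>))"
    using W_pr(1)[OF F(1) G(1)] by simp
  show ii: "integrable lborel (\<lambda>\<zeta>. f (x - \<zeta>) * g \<zeta>)"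
    by (rule Bochner_Integration.integrable_bound[OF i]) (auto simp: norm_mult)
  have "cmod (LINT \<zeta>|lborel. f (x - \<zeta>) * g \<zeta>) \<le> (LINT \<zeta>|lborel. cmod (f (x - \<zeta>) * g \<zeta>))"
    by (rule integral_norm_bound)
  also have "\<dots> = pr 0 (\<lambda>\<zeta>. complex_of_real (cmod (f (x - \<zeta>)))) (\<lambda>\<zeta>. complex_of_real (cmod (g \<zeta>)))"
    unfolding pr_def by (simp add: norm_mult)
  also have "\<dots> \<le> hs_norm 0 f * hs_norm 0 g"
    using W_pr(2)[OF F(1) G(1)] F(2) G(2) by simp
  finally show "cmod (LINT \<zeta>|lborel. f (x - \<zeta>) * g \<zeta>) \<le> hs_norm 0 f * hs_norm 0 g" .
qed

lemma nonlin_bound: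
  assumes "W 0 (w \<tau>)"
  shows "cmod (nonlin w \<tau> \<xi>) \<le> \<bar>\<xi>\<bar> / (4 * pi) * (hs_norm 0 (w \<tau>))\<^sup>2"
proof -
  have c: "cmod (\<i> * complex_of_real \<xi> / complex_of_real (4 * pi)) = \<bar>\<xi>\<bar> / (4 * pi)"
    by (simp add: norm_mult norm_divide)
  have "cmod (nonlin w \<tau> \<xi>) = \<bar>\<xi>\<bar> / (4 * pi) * cmod (LINT \<zeta>|lborel. w \<tau> (\<xi> - \<zeta>) * w \<tau> \<zeta>)"
    unfolding nonlin_def norm_mult c ..
  also have "\<dots> \<le> \<bar>\<xi>\<bar> / (4 * pi) * (hs_norm 0 (w \<tau>) * hs_norm 0 (w \<tau>))"
    by (intro mult_left_mono conv_bound assms) auto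
  finally show ?thesis by (simp add: power2_eq_square)
qed

lemma nonlin_diff:
  assumes u: "W 0 (u \<tau>)" and v: "W 0 (v \<tau>)"
  shows "cmod (nonlin u \<tau> \<xi> - nonlin v \<tau> \<xi>) \<le>
     \<bar>\<xi>\<bar> / (4 * pi) * (hs_norm 0 (\<lambda>\<zeta>. u \<tau> \<zeta> - v \<tau> \<zeta>) * (hs_norm 0 (u \<tau>) + hs_norm 0 (v \<tau>)))"
proof -
  define d where "d = (\<lambda>\<zeta>. u \<tau> \<zeta> - v \<tau> \<zeta>)"
  have dW: "W 0 d" unfolding d_def using W_diff[OF u v] .
  have c: "cmod (\<i> * complex_of_real \<xi> / complex_of_real (4 * pi)) = \<bar>\<xi>\<bar> / (4 * pi)"
    by (simp add: norm_mult norm_divide)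
  have e: "(LINT \<zeta>|lborel. u \<tau> (\<xi> - \<zeta>) * u \<tau> \<zeta>) - (LINT \<zeta>|lborel. v \<tau> (\<xi> - \<zeta>) * v \<tau> \<zeta>)
      = (LINT \<zeta>|lborel. d (\<xi> - \<zeta>) * u \<tau> \<zeta>) + (LINT \<zeta>|lborel. v \<tau> (\<xi> - \<zeta>) * d \<zeta>)"
  proof -
    have "(LINT \<zeta>|lborel. u \<tau> (\<xi> - \<zeta>) * u \<tau> \<zeta>) - (LINT \<zeta>|lborel. v \<tau> (\<xi> - \<zeta>) * v \<tau> \<zeta>)
        = (LINT \<zeta>|lborel. u \<tau> (\<xi> - \<zeta>) * u \<tau> \<zeta> - v \<tau> (\<xi> - \<zeta>) * v \<tau> \<zeta>)"
      using conv_bound(1)[OF u u] conv_bound(1)[OF v v] by simp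
    also have "\<dots> = (LINT \<zeta>|lborel. d (\<xi> - \<zeta>) * u \<tau> \<zeta> + v \<tau> (\<xi> - \<zeta>) * d \<zeta>)"
      by (intro Bochner_Integration.integral_cong refl) (simp add: d_def algebra_simps)
    also have "\<dots> = (LINT \<zeta>|lborel. d (\<xi> - \<zeta>) * u \<tau> \<zeta>) + (LINT \<zeta>|lborel. v \<tau> (\<xi> - \<zeta>) * d \<zeta>)"
      using conv_bound(1)[OF dW u] conv_bound(1)[OF v dW] by simp
    finally show ?thesis .
  qed
  have "cmod (nonlin u \<tau> \<xi> - nonlin v \<tau> \<xi>) = \<bar>\<xi>\<bar> / (4 * pi) *
      cmod ((LINT \<zeta>|lborel. d (\<xi> - \<zeta>) * u \<tau> \<zeta>) + (LINT \<zeta>|lborel. v \<tau> (\<xi> - \<zeta>) * d \<zeta>))"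
    unfolding nonlin_def right_diff_distrib[symmetric] e norm_mult c ..
  also have "\<dots> \<le> \<bar>\<xi>\<bar> / (4 * pi) * (hs_norm 0 d * hs_norm 0 (u \<tau>) + hs_norm 0 (v \<tau>) * hs_norm 0 d)"
    by (intro mult_left_mono order.trans[OF norm_triangle_ineq] add_mono conv_bound dW u v) auto
  finally show ?thesis unfolding d_def by (simp add: algebra_simps)
qed

definition kap :: "real \<Rightarrow> real \<Rightarrow> real \<Rightarrow> real" where
  "kap \<eta> T \<xi> = exp (\<eta> * T / 2) * (2 * T + 4 / \<eta>) / sqrt (1 + \<xi>\<^sup>2)"

lemma exp_bound:
  fixes \<eta> r T \<xi> :: real
  assumes "\<eta> > 0" "0 \<le> r" "r \<le> T"
  shows "exp (- \<eta> * (\<xi>\<^sup>2 - \<bar>\<xi>\<bar>) * r) \<le> exp (\<eta> * T / 2) * exp (- (\<eta> * \<xi>\<^sup>2 / 2) * r)"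
proof -
  have a: "\<bar>\<xi>\<bar> - \<xi>\<^sup>2 / 2 \<le> 1 / 2"
  proof -
    have "0 \<le> (\<bar>\<xi>\<bar> - 1)\<^sup>2" by (rule zero_le_power2)
    then show ?thesis by (simp add: power2_eq_square algebra_simps)
  qed
  have "\<eta> * r * (\<bar>\<xi>\<bar> - \<xi>\<^sup>2 / 2) \<le> \<eta> * r * (1 / 2)"
    using assms by (intro mult_left_mono a) auto
  also have "\<dots> \<le> \<eta> * T / 2" using assms by (simp add: mult_left_mono)
  finally have "- \<eta> * (\<xi>\<^sup>2 - \<bar>\<xi>\<bar>) * r \<le> \<eta> * T / 2 + - (\<eta> * \<xi>\<^sup>2 / 2) * r"
    by (simp add: algebra_simps)
  then show ?thesis by (simp flip: exp_add)
qed

lemma cont_exp_aux: "continuous_on S (\<lambda>\<tau>::real. exp (- (c::real) * (t - \<tau>)))"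
  by (intro continuous_intros)

lemma si_exp: "set_integrable lborel {0..t::real} (\<lambda>\<tau>. exp (- (c::real) * (t - \<tau>)))"
  by (rule borel_integrable_atLeastAtMost'[OF cont_exp_aux])

lemma int_exp_le_t:
  fixes c t :: real
  assumes "c \<ge> 0" "t \<ge> 0"
  shows "(LINT \<tau>:{0..t}|lborel. exp (- c * (t - \<tau>))) \<le> t"
proof -
  have "(LINT \<tau>:{0..t}|lborel. exp (- c * (t - \<tau>))) \<le> (LINT \<tau>:{0..t}|lborel. 1)"
  proof (rule set_integral_mono[OF si_exp])
    show "set_integrable lborel {0..t} (\<lambda>\<tau>. 1::real)"
      by (rule borel_integrable_atLeastAtMost') (intro continuous_intros)
    fix \<tau> assume "\<tau> \<in> {0..t}"
    then show "exp (- c * (t - \<tau>)) \<le> 1" using assms by (auto simp: mult_nonneg_nonneg)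
  qed
  also have "\<dots> = t" using assms by (simp add: set_lebesgue_integral_def)
  finally show ?thesis .
qed

lemma int_exp_le_inv:
  fixes c t :: real
  assumes "c > 0" "t \<ge> 0"
  shows "(LINT \<tau>:{0..t}|lborel. exp (- c * (t - \<tau>))) \<le> 1 / c"
proof -
  have "(LINT \<tau>:{0..t}|lborel. exp (- c * (t - \<tau>))) = (\<integral>\<tau>. exp (- c * (t - \<tau>)) * indicator {0..t} \<tau> \<partial>lborel)"
    unfolding set_lebesgue_integral_def by (intro Bochner_Integration.integral_cong) (auto simp: indicator_def)
  also have "\<dots> = exp (- c * (t - t)) / c - exp (- c * (t - 0)) / c"
  proof (rule integral_FTC_Icc_real)
    show "0 \<le> t" by fact
    fix x
    show "((\<lambda>\<tau>. exp (- c * (t - \<tau>)) / c) has_real_derivative exp (- c * (t - x))) (at x)"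
      using assms by (auto intro!: derivative_eq_intros)
    show "isCont (\<lambda>\<tau>. exp (- c * (t - \<tau>))) x" by (intro continuous_intros)
  qed
  also have "\<dots> \<le> 1 / c" using assms by simp
  finally show ?thesis .
qed

lemma kern:
  fixes \<eta> t T \<xi> :: real
  assumes eta: "\<eta> > 0" and t: "0 \<le> t" "t \<le> T"
  shows "\<bar>\<xi>\<bar> * (LINT \<tau>:{0..t}|lborel. exp (- \<eta> * (\<xi>\<^sup>2 - \<bar>\<xi>\<bar>) * (t - \<tau>))) \<le> kap \<eta> T \<xi>"
proof -
  define c where "c = \<eta> * \<xi>\<^sup>2 / 2"
  define E where "E = exp (\<eta> * T / 2)"
  have E: "E > 0" by (simp add: E_def)
  have si1: "set_integrable lborel {0..t} (\<lambda>\<tau>. exp (- \<eta> * (\<xi>\<^sup>2 - \<bar>\<xi>\<bar>) * (t - \<tau>)))"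
    using si_exp[of t "\<eta> * (\<xi>\<^sup>2 - \<bar>\<xi>\<bar>)"] by simp
  have "(LINT \<tau>:{0..t}|lborel. exp (- \<eta> * (\<xi>\<^sup>2 - \<bar>\<xi>\<bar>) * (t - \<tau>))) \<le> (LINT \<tau>:{0..t}|lborel. E * exp (- c * (t - \<tau>)))"
  proof (rule set_integral_mono[OF si1])
    show "set_integrable lborel {0..t} (\<lambda>\<tau>. E * exp (- c * (t - \<tau>)))"
      using integrable_mult_right[OF si_exp[of t c, unfolded set_integrable_def], of E]
      unfolding set_integrable_def by (simp add: ac_simps)
    fix \<tau> assume "\<tau> \<in> {0..t}"
    then show "exp (- \<eta> * (\<xi>\<^sup>2 - \<bar>\<xi>\<bar>) * (t - \<tau>)) \<le> E * exp (- c * (t - \<tau>))"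
      unfolding E_def c_def using exp_bound[OF eta, of "t - \<tau>" T \<xi>] t by auto
  qed
  also have "\<dots> = E * (LINT \<tau>:{0..t}|lborel. exp (- c * (t - \<tau>)))"
    by (simp add: set_lebesgue_integral_def)
  finally have I: "(LINT \<tau>:{0..t}|lborel. exp (- \<eta> * (\<xi>\<^sup>2 - \<bar>\<xi>\<bar>) * (t - \<tau>))) \<le> E * (LINT \<tau>:{0..t}|lborel. exp (- c * (t - \<tau>)))" .
  have sq: "sqrt (1 + \<xi>\<^sup>2) > 0" by (simp add: add_pos_nonneg)
  show ?thesis
  proof (cases "\<bar>\<xi>\<bar> \<le> 1")
    case True
    have "\<bar>\<xi>\<bar> * (LINT \<tau>:{0..t}|lborel. exp (- \<eta> * (\<xi>\<^sup>2 - \<bar>\<xi>\<bar>) * (t - \<tau>))) \<le> 1 * (E * t)"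
    proof (rule mult_mono)
      show "(LINT \<tau>:{0..t}|lborel. exp (- \<eta> * (\<xi>\<^sup>2 - \<bar>\<xi>\<bar>) * (t - \<tau>))) \<le> E * t"
      proof -
        have c0: "c \<ge> 0" using eta by (simp add: c_def)
        have "E * (LINT \<tau>:{0..t}|lborel. exp (- c * (t - \<tau>))) \<le> E * t"
          using int_exp_le_t[OF c0 t(1)] E by (intro mult_left_mono) auto
        then show ?thesis using I by linarith
      qed
      show "0 \<le> (LINT \<tau>:{0..t}|lborel. exp (- \<eta> * (\<xi>\<^sup>2 - \<bar>\<xi>\<bar>) * (t - \<tau>)))"
        by (auto simp: set_lebesgue_integral_def intro!: integral_nonneg_AE)
    qed (use True in auto)
    also have "\<dots> \<le> E * T" using t E by simp
    also have "\<dots> \<le> kap \<eta> T \<xi>"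
    proof -
      have s2: "sqrt (1 + \<xi>\<^sup>2) \<le> 2"
      proof -
        have "\<xi>\<^sup>2 \<le> 1" using True by (simp add: abs_square_le_1)
        then have "1 + \<xi>\<^sup>2 \<le> 2\<^sup>2" by simp
        then have "sqrt (1 + \<xi>\<^sup>2) \<le> sqrt (2\<^sup>2)" by (rule real_sqrt_le_mono)
        then show ?thesis by simp
      qed
      have "E * T * sqrt (1 + \<xi>\<^sup>2) \<le> E * T * 2" using t E s2 by (intro mult_left_mono) auto
      also have "\<dots> \<le> E * (2 * T + 4 / \<eta>)" using E eta t by (simp add: mult_left_mono)
      finally show ?thesis unfolding kap_def E_def[symmetric] using sq by (simp add: pos_le_divide_eq)
    qed
    finally show ?thesis .
  next
    case False
    have c: "c > 0" using False eta by (auto simp: c_def)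
    have "\<bar>\<xi>\<bar> * (LINT \<tau>:{0..t}|lborel. exp (- \<eta> * (\<xi>\<^sup>2 - \<bar>\<xi>\<bar>) * (t - \<tau>))) \<le> \<bar>\<xi>\<bar> * (E * (1 / c))"
    proof (intro mult_left_mono)
      have "E * (LINT \<tau>:{0..t}|lborel. exp (- c * (t - \<tau>))) \<le> E * (1 / c)"
        using int_exp_le_inv[OF c t(1)] E by (intro mult_left_mono) auto
      then show "(LINT \<tau>:{0..t}|lborel. exp (- \<eta> * (\<xi>\<^sup>2 - \<bar>\<xi>\<bar>) * (t - \<tau>))) \<le> E * (1 / c)"
        using I by linarith
    qed simp
    also have "\<dots> = E * 2 / (\<eta> * \<bar>\<xi>\<bar>)" using False eta by (simp add: c_def field_simps power2_eq_square)
    also have "\<dots> \<le> kap \<eta> T \<xi>"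
    proof -
      have s2: "sqrt (1 + \<xi>\<^sup>2) \<le> 2 * \<bar>\<xi>\<bar>"
      proof -
        have "1 \<le> \<xi>\<^sup>2" using False abs_square_le_1[of \<xi>] by linarith
        then have "1 + \<xi>\<^sup>2 \<le> (2 * \<bar>\<xi>\<bar>)\<^sup>2" by (simp add: power_mult_distrib)
        then have "sqrt (1 + \<xi>\<^sup>2) \<le> sqrt ((2 * \<bar>\<xi>\<bar>)\<^sup>2)" by (rule real_sqrt_le_mono)
        also have "\<dots> = 2 * \<bar>\<xi>\<bar>" by (simp only: real_sqrt_abs)
        finally show ?thesis .
      qed
      have "E * 2 / (\<eta> * \<bar>\<xi>\<bar>) * sqrt (1 + \<xi>\<^sup>2) \<le> E * 2 / (\<eta> * \<bar>\<xi>\<bar>) * (2 * \<bar>\<xi>\<bar>)"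
        using s2 E eta by (intro mult_left_mono) auto
      also have "\<dots> = E * (4 / \<eta>)" using False eta by (simp add: field_simps)
      also have "\<dots> \<le> E * (2 * T + 4 / \<eta>)" using E t by (intro mult_left_mono) auto
      finally show ?thesis unfolding kap_def E_def[symmetric] using sq by (simp add: pos_le_divide_eq)
    qed
    finally show ?thesis .
  qed
qed

lemma kap_W:
  fixes \<eta> T :: real
  assumes "\<eta> > 0"
  shows "W 0 (\<lambda>\<xi>. complex_of_real (kap \<eta> T \<xi>))"
proof -
  define K where "K = exp (\<eta> * T / 2) * (2 * T + 4 / \<eta>)"
  have i: "integrable lborel (\<lambda>x::real. inverse (1 + x^2))"
    using integrable_inverse_1_plus_square by (simp add: set_integrable_def)
  have pt: "(cmod (complex_of_real (kap \<eta> T \<xi>)))\<^sup>2 = K\<^sup>2 * inverse (1 + \<xi>^2)" for \<xi>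
  proof -
    have q: "0 \<le> 1 + \<xi>\<^sup>2" by (simp add: add_nonneg_nonneg)
    have "(cmod (complex_of_real (kap \<eta> T \<xi>)))\<^sup>2 = (kap \<eta> T \<xi>)\<^sup>2" by simp
    also have "\<dots> = K\<^sup>2 / (sqrt (1 + \<xi>\<^sup>2))\<^sup>2" unfolding kap_def K_def[symmetric] by (rule power_divide)
    also have "\<dots> = K\<^sup>2 * inverse (1 + \<xi>^2)" using real_sqrt_pow2[OF q] by (simp add: divide_inverse)
    finally show ?thesis .
  qed
  have "integrable lborel (\<lambda>\<xi>. K\<^sup>2 * inverse (1 + \<xi>^2))" using i by (rule integrable_mult_right)
  then have "integrable lborel (\<lambda>\<xi>. (cmod (complex_of_real (kap \<eta> T \<xi>)))\<^sup>2)" unfolding pt .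
  moreover have "(\<lambda>\<xi>. complex_of_real (kap \<eta> T \<xi>)) \<in> borel_measurable lborel" unfolding kap_def by measurable
  ultimately show ?thesis unfolding W_def by simp
qed

lemma duh:
  fixes \<eta> t T \<xi> M :: real
  assumes eta: "\<eta> > 0" and t: "0 \<le> t" "t \<le> T" and M0: "M \<ge> 0"
    and si: "set_integrable lborel {0..t} (\<lambda>\<tau>. S0sym \<eta> (t - \<tau>) \<xi> * G \<tau>)"
    and b: "\<And>\<tau>. \<tau> \<in> {0..t} \<Longrightarrow> cmod (G \<tau>) \<le> \<bar>\<xi>\<bar> * M"
  shows "cmod (LINT \<tau>:{0..t}|lborel. S0sym \<eta> (t - \<tau>) \<xi> * G \<tau>) \<le> M * kap \<eta> T \<xi>"
proof -
  have "cmod (LINT \<tau>:{0..t}|lborel. S0sym \<eta> (t - \<tau>) \<xi> * G \<tau>) \<le> (LINT \<tau>:{0..t}|lborel. cmod (S0sym \<eta> (t - \<tau>) \<xi> * G \<tau>))"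
    by (rule set_integral_norm_bound[OF si])
  also have "\<dots> \<le> (LINT \<tau>:{0..t}|lborel. (\<bar>\<xi>\<bar> * M) * exp (- \<eta> * (\<xi>\<^sup>2 - \<bar>\<xi>\<bar>) * (t - \<tau>)))"
  proof (rule set_integral_mono)
    have e: "(\<lambda>\<tau>. norm (indicator {0..t} \<tau> *\<^sub>R (S0sym \<eta> (t - \<tau>) \<xi> * G \<tau>))) = (\<lambda>\<tau>. indicator {0..t} \<tau> *\<^sub>R cmod (S0sym \<eta> (t - \<tau>) \<xi> * G \<tau>))"
      by (auto simp: indicator_def)
    have "integrable lborel (\<lambda>\<tau>. norm (indicator {0..t} \<tau> *\<^sub>R (S0sym \<eta> (t - \<tau>) \<xi> * G \<tau>)))"
      using si unfolding set_integrable_def by (rule integrable_norm)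
    then show "set_integrable lborel {0..t} (\<lambda>\<tau>. cmod (S0sym \<eta> (t - \<tau>) \<xi> * G \<tau>))"
      unfolding set_integrable_def e .
    show "set_integrable lborel {0..t} (\<lambda>\<tau>. \<bar>\<xi>\<bar> * M * exp (- \<eta> * (\<xi>\<^sup>2 - \<bar>\<xi>\<bar>) * (t - \<tau>)))"
      using integrable_mult_right[OF si_exp[of t "\<eta> * (\<xi>\<^sup>2 - \<bar>\<xi>\<bar>)", unfolded set_integrable_def], of "\<bar>\<xi>\<bar> * M"]
      unfolding set_integrable_def by (simp add: ac_simps)
    fix \<tau> assume \<tau>: "\<tau> \<in> {0..t}"
    show "cmod (S0sym \<eta> (t - \<tau>) \<xi> * G \<tau>) \<le> \<bar>\<xi>\<bar> * M * exp (- \<eta> * (\<xi>\<^sup>2 - \<bar>\<xi>\<bar>) * (t - \<tau>))"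
      unfolding S0sym_def norm_mult using b[OF \<tau>] by (simp add: mult.commute mult_left_mono)
  qed
  also have "\<dots> = M * (\<bar>\<xi>\<bar> * (LINT \<tau>:{0..t}|lborel. exp (- \<eta> * (\<xi>\<^sup>2 - \<bar>\<xi>\<bar>) * (t - \<tau>))))"
    by (simp add: set_lebesgue_integral_def)
  also have "\<dots> \<le> M * kap \<eta> T \<xi>"
    using kern[OF eta t] M0 by (intro mult_left_mono)
  finally show ?thesis .
qed

lemma CHs_cont:
  assumes w: "w \<in> CHs T s" shows "continuous_on {0..T} (\<lambda>t. hs_norm s (w t))"
  unfolding continuous_on_eq_continuous_within
proof
  let ?g = "\<lambda>t. hs_norm s (w t)"
  fix t assume t: "t \<in> {0..T}"
  have lim: "((\<lambda>\<tau>. hs_norm s (\<lambda>\<xi>. w \<tau> \<xi> - w t \<xi>)) \<longlongrightarrow> 0) (at t within {0..T})"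
    using w t unfolding CHs_def by blast
  have "(?g \<longlongrightarrow> ?g t) (at t within {0..T})"
  proof (rule metric_tendsto_imp_tendsto[OF lim])
    show "\<forall>\<^sub>F x in at t within {0..T}. dist (?g x) (?g t) \<le> dist (hs_norm s (\<lambda>\<xi>. w x \<xi> - w t \<xi>)) 0"
      unfolding eventually_at_filter
      using hs_norm_cont_aux[OF CHs_W[OF w] CHs_W[OF w t]] by (auto simp: dist_real_def)
  qed
  then show "continuous (at t within {0..T}) ?g" unfolding continuous_within .
qed

lemma S0_bound:
  fixes \<eta> t T \<xi> :: real
  assumes "\<eta> > 0" "0 \<le> t" "t \<le> T"
  shows "cmod (S0sym \<eta> t \<xi>) \<le> exp (\<eta> * T / 4)"
proof -
  have a: "\<xi>\<^sup>2 - \<bar>\<xi>\<bar> \<ge> - 1 / 4"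
  proof -
    have "0 \<le> (\<bar>\<xi>\<bar> - 1/2)\<^sup>2" by (rule zero_le_power2)
    then show ?thesis by (simp add: power2_eq_square algebra_simps)
  qed
  have "\<eta> * t * (- (\<xi>\<^sup>2 - \<bar>\<xi>\<bar>)) \<le> \<eta> * t * (1/4)"
    using assms a by (intro mult_left_mono) auto
  also have "\<dots> \<le> \<eta> * T / 4" using assms by (simp add: mult_left_mono)
  finally have "- \<eta> * (\<xi>\<^sup>2 - \<bar>\<xi>\<bar>) * t \<le> \<eta> * T / 4" by (simp add: algebra_simps)
  then show ?thesis unfolding S0sym_def by simp
qed

lemma S0_meas[measurable]: "(\<lambda>\<xi>. S0sym \<eta> t \<xi>) \<in> borel_measurable lborel"
  unfolding S0sym_def by measurable

lemma duh_L2: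
  fixes \<eta> t T M :: real
  assumes eta: "\<eta> > 0" and t: "0 \<le> t" "t \<le> T" and M: "M \<ge> 0"
    and v[measurable]: "v \<in> borel_measurable lborel"
    and ae: "AE \<xi> in lborel. set_integrable lborel {0..t} (\<lambda>\<tau>. S0sym \<eta> (t - \<tau>) \<xi> * G \<tau> \<xi>)
                    \<and> cmod (v \<xi>) = cmod (LINT \<tau>:{0..t}|lborel. S0sym \<eta> (t - \<tau>) \<xi> * G \<tau> \<xi>)"
    and b: "\<And>\<tau> \<xi>. \<tau> \<in> {0..t} \<Longrightarrow> cmod (G \<tau> \<xi>) \<le> \<bar>\<xi>\<bar> * M"
  shows "W 0 v" "hs_norm 0 v \<le> M * hs_norm 0 (\<lambda>\<xi>. complex_of_real (kap \<eta> T \<xi>))"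
proof -
  have "AE \<xi> in lborel. cmod (v \<xi>) \<le> M * cmod (complex_of_real (kap \<eta> T \<xi>))"
    using ae
  proof eventually_elim
    case (elim \<xi>)
    have "cmod (v \<xi>) \<le> M * kap \<eta> T \<xi>"
      using duh[OF eta t M, where \<xi>=\<xi> and G="\<lambda>\<tau>. G \<tau> \<xi>"] elim b by auto
    also have "\<dots> \<le> M * cmod (complex_of_real (kap \<eta> T \<xi>))" using M by (intro mult_left_mono) auto
    finally show ?case .
  qed
  then show "W 0 v" "hs_norm 0 v \<le> M * hs_norm 0 (\<lambda>\<xi>. complex_of_real (kap \<eta> T \<xi>))"
    using W_dom[OF v kap_W[OF eta] M] by auto
qed

lemma set_integral_singleton0: "(LINT \<tau>:{0::real}|lborel. f \<tau>) = (0::complex)"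
proof -
  have "AE \<tau> in lborel. indicator {0::real} \<tau> *\<^sub>R f \<tau> = 0"
    using AE_lborel_singleton[of 0] by eventually_elim (auto simp: indicator_def)
  then show ?thesis unfolding set_lebesgue_integral_def by (simp add: integral_eq_zero_AE)
qed

lemma mild_at:
  assumes "mild_solution \<eta> T \<phi> u" "t \<in> {0..T}"
  shows "AE \<xi> in lborel.
        (\<forall>\<tau>\<in>{0..t}. integrable lborel (\<lambda>\<zeta>. u \<tau> (\<xi> - \<zeta>) * u \<tau> \<zeta>))
      \<and> set_integrable lborel {0..t} (\<lambda>\<tau>. S0sym \<eta> (t - \<tau>) \<xi> * nonlin u \<tau> \<xi>)
      \<and> u t \<xi> = S0sym \<eta> t \<xi> * \<phi> \<xi> - (LINT \<tau>:{0..t}|lborel. S0sym \<eta> (t - \<tau>) \<xi> * nonlin u \<tau> \<xi>)"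
  using assms unfolding mild_solution_def by blast

definition KK :: "real \<Rightarrow> real \<Rightarrow> real" where
  "KK \<eta> T = hs_norm 0 (\<lambda>\<xi>. complex_of_real (kap \<eta> T \<xi>)) / (4 * pi)"

lemma KK_nn: "KK \<eta> T \<ge> 0" unfolding KK_def by simp

lemma Sphi_bound:
  fixes \<eta> t T :: real
  assumes eta: "\<eta> > 0" and t: "0 \<le> t" "t \<le> T" and phi: "W 0 \<phi>"
  shows "W 0 (\<lambda>\<xi>. S0sym \<eta> t \<xi> * \<phi> \<xi>)" "hs_norm 0 (\<lambda>\<xi>. S0sym \<eta> t \<xi> * \<phi> \<xi>) \<le> exp (\<eta> * T / 4) * hs_norm 0 \<phi>"
proof -
  have [measurable]: "\<phi> \<in> borel_measurable lborel" using phi unfolding W_def by simp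
  have "AE \<xi> in lborel. cmod (S0sym \<eta> t \<xi> * \<phi> \<xi>) \<le> exp (\<eta> * T / 4) * cmod (\<phi> \<xi>)"
    using S0_bound[OF eta t] by (auto simp: norm_mult intro!: mult_right_mono)
  from W_dom[OF _ phi _ this] show "W 0 (\<lambda>\<xi>. S0sym \<eta> t \<xi> * \<phi> \<xi>)" "hs_norm 0 (\<lambda>\<xi>. S0sym \<eta> t \<xi> * \<phi> \<xi>) \<le> exp (\<eta> * T / 4) * hs_norm 0 \<phi>"
    by auto
qed

lemma mild_diff_bound:
  fixes \<eta> t T B :: real
  assumes eta: "\<eta> > 0" and t: "0 \<le> t" "t \<le> T" and mild: "mild_solution \<eta> T \<phi> u"
    and phi: "W 0 \<phi>" and ut: "u t \<in> borel_measurable lborel"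
    and ub: "\<And>\<tau>. \<tau> \<in> {0..t} \<Longrightarrow> W 0 (u \<tau>) \<and> hs_norm 0 (u \<tau>) \<le> B"
  shows "W 0 (\<lambda>\<xi>. u t \<xi> - S0sym \<eta> t \<xi> * \<phi> \<xi>)" "hs_norm 0 (\<lambda>\<xi>. u t \<xi> - S0sym \<eta> t \<xi> * \<phi> \<xi>) \<le> KK \<eta> T * B\<^sup>2"
proof -
  have [measurable]: "\<phi> \<in> borel_measurable lborel" using phi unfolding W_def by simp
  note ut[measurable]
  have "hs_norm 0 (u 0) \<le> B" using ub[of 0] t by auto
  then have B: "B \<ge> 0" using hs_norm_nn[of 0 "u 0"] by linarith
  have ae: "AE \<xi> in lborel. set_integrable lborel {0..t} (\<lambda>\<tau>. S0sym \<eta> (t - \<tau>) \<xi> * nonlin u \<tau> \<xi>)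
         \<and> cmod (u t \<xi> - S0sym \<eta> t \<xi> * \<phi> \<xi>) = cmod (LINT \<tau>:{0..t}|lborel. S0sym \<eta> (t - \<tau>) \<xi> * nonlin u \<tau> \<xi>)"
    using mild_at[OF mild, of t, OF atLeastAtMost_iff[THEN iffD2, OF conjI[OF t]]] by eventually_elim auto
  have b: "cmod (nonlin u \<tau> \<xi>) \<le> \<bar>\<xi>\<bar> * (B\<^sup>2 / (4 * pi))" if "\<tau> \<in> {0..t}" for \<tau> \<xi>
  proof -
    have "cmod (nonlin u \<tau> \<xi>) \<le> \<bar>\<xi>\<bar> / (4 * pi) * (hs_norm 0 (u \<tau>))\<^sup>2"
      using nonlin_bound ub[OF that] by blast
    also have "\<dots> \<le> \<bar>\<xi>\<bar> / (4 * pi) * B\<^sup>2"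
      using ub[OF that] by (intro mult_left_mono power_mono) auto
    finally show ?thesis by simp
  qed
  have M: "B\<^sup>2 / (4 * pi) \<ge> 0" by simp
  note r = duh_L2[OF eta t M _ ae b]
  show "W 0 (\<lambda>\<xi>. u t \<xi> - S0sym \<eta> t \<xi> * \<phi> \<xi>)" by (rule r(1)) measurable
  have "hs_norm 0 (\<lambda>\<xi>. u t \<xi> - S0sym \<eta> t \<xi> * \<phi> \<xi>) \<le> B\<^sup>2 / (4 * pi) * hs_norm 0 (\<lambda>\<xi>. complex_of_real (kap \<eta> T \<xi>))"
    by (rule r(2)) measurable
  then show "hs_norm 0 (\<lambda>\<xi>. u t \<xi> - S0sym \<eta> t \<xi> * \<phi> \<xi>) \<le> KK \<eta> T * B\<^sup>2"
    unfolding KK_def by (simp add: field_simps)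
qed

lemma mild_at0:
  assumes mild: "mild_solution \<eta> T \<phi> u" and T: "T \<ge> 0"
    and phi: "W 0 \<phi>" and u0: "W 0 (u 0)"
  shows "hs_norm 0 (u 0) \<le> hs_norm 0 \<phi>"
proof -
  have [measurable]: "\<phi> \<in> borel_measurable lborel" "u 0 \<in> borel_measurable lborel" using phi u0 unfolding W_def by auto
  have S00: "S0sym \<eta> 0 \<xi> = 1" for \<xi> unfolding S0sym_def by simp
  have "AE \<xi> in lborel. u 0 \<xi> = S0sym \<eta> 0 \<xi> * \<phi> \<xi> - (LINT \<tau>:{0..0}|lborel. S0sym \<eta> (0 - \<tau>) \<xi> * nonlin u \<tau> \<xi>)"
    using mild_at[OF mild, of 0, OF atLeastAtMost_iff[THEN iffD2, OF conjI[OF order_refl T]]] by eventually_elim auto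
  then have "AE \<xi> in lborel. u 0 \<xi> = \<phi> \<xi>"
    by eventually_elim (simp add: S00 set_integral_singleton0)
  then have "AE \<xi> in lborel. cmod (u 0 \<xi>) \<le> 1 * cmod (\<phi> \<xi>)" by eventually_elim simp
  from W_dom(2)[OF _ phi _ this] show ?thesis by simp
qed

lemma bootstrap:
  fixes \<eta> T a :: real
  assumes eta: "\<eta> > 0" and T: "T > 0" and uC: "u \<in> CHs T 0" and mild: "mild_solution \<eta> T \<phi> u"
    and phi: "W 0 \<phi>" and a: "a = exp (\<eta> * T / 4) * hs_norm 0 \<phi>" "a > 0" and small: "4 * KK \<eta> T * a < 1"
  shows "\<forall>t\<in>{0..T}. hs_norm 0 (u t) \<le> 2 * a"
proof (rule ccontr)
  let ?g = "\<lambda>t. hs_norm 0 (u t)"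
  assume "\<not> (\<forall>t\<in>{0..T}. ?g t \<le> 2 * a)"
  then have ne: "{0..T} \<inter> ?g -` {2 * a..} \<noteq> {}" by force
  have cg: "continuous_on {0..T} ?g" by (rule CHs_cont[OF uC])
  have "closed ({0..T} \<inter> ?g -` {2 * a..})" by (rule continuous_closed_preimage[OF cg]) auto
  then have "compact ({0..T} \<inter> ({0..T} \<inter> ?g -` {2 * a..}))" by (intro compact_Int_closed) auto
  then have cZ: "compact ({0..T} \<inter> ?g -` {2 * a..})" by (simp add: Int_absorb1 inf.absorb_iff2 Int_assoc)
  obtain t0 where t0: "t0 \<in> {0..T} \<inter> ?g -` {2 * a..}" and mn: "\<And>t. t \<in> {0..T} \<inter> ?g -` {2 * a..} \<Longrightarrow> t0 \<le> t"
    using compact_attains_inf[OF cZ ne] by blast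
  have Wu: "\<And>t. t \<in> {0..T} \<Longrightarrow> W 0 (u t)" using CHs_W[OF uC] by blast
  have E: "exp (\<eta> * T / 4) \<ge> 1" using eta T by simp
  have g0: "?g 0 \<le> a"
  proof -
    have "?g 0 \<le> hs_norm 0 \<phi>" by (rule mild_at0[OF mild _ phi Wu]) (use T in auto)
    also have "\<dots> = 1 * hs_norm 0 \<phi>" by simp
    also have "\<dots> \<le> a" unfolding a(1) by (rule mult_right_mono[OF E hs_norm_nn])
    finally show ?thesis .
  qed
  have ge: "?g t0 \<ge> 2 * a" using t0 by auto
  have t0pos: "t0 > 0" using t0 g0 ge a(2) by (cases "t0 = 0") auto
  have lt: "?g \<tau> < 2 * a" if "\<tau> \<in> {0..<t0}" for \<tau>
  proof (rule ccontr)
    assume "\<not> ?g \<tau> < 2 * a"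
    then have "\<tau> \<in> {0..T} \<inter> ?g -` {2 * a..}" using that t0 by auto
    then show False using mn that by force
  qed
  have le: "?g t0 \<le> 2 * a"
  proof -
    have "(?g \<longlongrightarrow> ?g t0) (at t0 within {0..T})" using cg t0 unfolding continuous_on_def by blast
    then have "(?g \<longlongrightarrow> ?g t0) (at t0 within {0..t0})" by (rule tendsto_within_subset) (use t0 in auto)
    then have lim: "(?g \<longlongrightarrow> ?g t0) (at_left t0)" using at_within_Icc_at_left[OF t0pos] by simp
    have ev: "eventually (\<lambda>\<tau>. 2 * a \<ge> ?g \<tau>) (at_left t0)"
      using eventually_at_left_real[OF t0pos]
    proof eventually_elim
      case (elim \<tau>)
      then have "\<tau> \<in> {0..<t0}" by auto
      then show ?case using lt[of \<tau>] by linarith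
    qed
    show ?thesis by (rule tendsto_upperbound[OF lim ev]) simp
  qed
  have tt: "0 \<le> t0" "t0 \<le> T" using t0 by auto
  have ub: "W 0 (u \<tau>) \<and> ?g \<tau> \<le> 2 * a" if "\<tau> \<in> {0..t0}" for \<tau>
  proof -
    have "\<tau> \<in> {0..T}" using that tt by auto
    moreover have "?g \<tau> \<le> 2 * a"
      using that le lt[of \<tau>] by (cases "\<tau> = t0") auto
    ultimately show ?thesis using Wu by blast
  qed
  have ut0[measurable]: "u t0 \<in> borel_measurable lborel" using Wu[of t0] tt unfolding W_def by auto
  note D = mild_diff_bound[OF eta tt mild phi ut0 ub]
  note S = Sphi_bound[OF eta tt phi]
  have "?g t0 = hs_norm 0 (\<lambda>\<xi>. S0sym \<eta> t0 \<xi> * \<phi> \<xi> + (u t0 \<xi> - S0sym \<eta> t0 \<xi> * \<phi> \<xi>))" by simp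
  also have "\<dots> \<le> hs_norm 0 (\<lambda>\<xi>. S0sym \<eta> t0 \<xi> * \<phi> \<xi>) + hs_norm 0 (\<lambda>\<xi>. u t0 \<xi> - S0sym \<eta> t0 \<xi> * \<phi> \<xi>)"
    by (rule hs_triangle[OF S(1) D(1)])
  also have "\<dots> \<le> a + KK \<eta> T * (2 * a)\<^sup>2" using S(2) D(2) a(1) by linarith
  also have "\<dots> = a + (4 * KK \<eta> T * a) * a" by (simp add: power2_eq_square)
  also have "\<dots> < a + 1 * a" using small a(2) by (intro add_strict_left_mono mult_strict_right_mono) auto
  finally show False using ge by simp
qed

lemma nonlin_scale: "nonlin (\<lambda>\<tau> \<xi>. c *\<^sub>R w \<tau> \<xi>) \<tau> \<xi> = (c\<^sup>2) *\<^sub>R nonlin w \<tau> \<xi>"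
proof -
  have "(LINT \<zeta>|lborel. c *\<^sub>R w \<tau> (\<xi> - \<zeta>) * c *\<^sub>R w \<tau> \<zeta>) = (LINT \<zeta>|lborel. (c\<^sup>2) *\<^sub>R (w \<tau> (\<xi> - \<zeta>) * w \<tau> \<zeta>))"
    by (intro Bochner_Integration.integral_cong refl) (simp add: power2_eq_square)
  also have "\<dots> = (c\<^sup>2) *\<^sub>R (LINT \<zeta>|lborel. w \<tau> (\<xi> - \<zeta>) * w \<tau> \<zeta>)" by simp
  finally show ?thesis unfolding nonlin_def by (simp add: scaleR_conv_of_real algebra_simps)
qed

lemma set_int_scaleR:
  fixes S N :: "real \<Rightarrow> complex"
  shows "(LINT \<tau>:A|lborel. S \<tau> * (c *\<^sub>R N \<tau>)) = c *\<^sub>R (LINT \<tau>:A|lborel. S \<tau> * N \<tau>)"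
proof -
  have "(LINT \<tau>:A|lborel. S \<tau> * (c *\<^sub>R N \<tau>)) = (LINT \<tau>|lborel. c *\<^sub>R (indicator A \<tau> *\<^sub>R (S \<tau> * N \<tau>)))"
    unfolding set_lebesgue_integral_def by (intro Bochner_Integration.integral_cong refl) (simp add: scaleR_conv_of_real algebra_simps)
  also have "\<dots> = c *\<^sub>R (LINT \<tau>|lborel. indicator A \<tau> *\<^sub>R (S \<tau> * N \<tau>))" by (rule integral_scaleR_right)
  finally show ?thesis unfolding set_lebesgue_integral_def .
qed

lemma set_integrable_scaleR':
  fixes S N :: "real \<Rightarrow> complex"
  assumes "set_integrable lborel A (\<lambda>\<tau>. S \<tau> * N \<tau>)"
  shows "set_integrable lborel A (\<lambda>\<tau>. S \<tau> * (c *\<^sub>R N \<tau>))"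
proof -
  have "integrable lborel (\<lambda>\<tau>. c *\<^sub>R (indicator A \<tau> *\<^sub>R (S \<tau> * N \<tau>)))"
    using assms unfolding set_integrable_def by (rule integrable_scaleR_right)
  then show ?thesis unfolding set_integrable_def
    by (rule Bochner_Integration.integrable_cong[THEN iffD1, rotated 2]) (auto simp: scaleR_conv_of_real algebra_simps)
qed

lemma second_order:
  fixes \<eta> T \<epsilon> a t :: real and h :: "real \<Rightarrow> complex"
  defines "V \<equiv> \<lambda>\<tau> \<xi>. S0sym \<eta> \<tau> \<xi> * h \<xi>"
  defines "Q \<equiv> \<lambda>t \<xi>. LINT \<tau>:{0..t}|lborel. S0sym \<eta> (t - \<tau>) \<xi> * nonlin V \<tau> \<xi>"
  assumes eta: "\<eta> > 0" and T: "T > 0" and uC: "u \<in> CHs T 0"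
    and mild: "mild_solution \<eta> T (\<lambda>\<xi>. \<epsilon> *\<^sub>R h \<xi>) u"
    and hW: "W 0 h" and a: "a = exp (\<eta> * T / 4) * (\<bar>\<epsilon>\<bar> * hs_norm 0 h)" "a > 0"
    and small: "4 * KK \<eta> T * a < 1"
    and Qm: "Q t \<in> borel_measurable lborel"
    and Qsi: "\<And>\<xi>. set_integrable lborel {0..t} (\<lambda>\<tau>. S0sym \<eta> (t - \<tau>) \<xi> * nonlin V \<tau> \<xi>)"
    and t: "t \<in> {0..T}"
  shows "W 0 (\<lambda>\<xi>. u t \<xi> - \<epsilon> *\<^sub>R V t \<xi>)"
    "hs_norm 0 (\<lambda>\<xi>. u t \<xi> - \<epsilon> *\<^sub>R V t \<xi>) \<le> KK \<eta> T * (2 * a)\<^sup>2"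
    "W 0 (\<lambda>\<xi>. u t \<xi> - \<epsilon> *\<^sub>R V t \<xi> + \<epsilon>\<^sup>2 *\<^sub>R Q t \<xi>)"
    "hs_norm 0 (\<lambda>\<xi>. u t \<xi> - \<epsilon> *\<^sub>R V t \<xi> + \<epsilon>\<^sup>2 *\<^sub>R Q t \<xi>) \<le> KK \<eta> T * (KK \<eta> T * (2 * a)\<^sup>2 * (3 * a))"
proof -
  define \<phi> where "\<phi> = (\<lambda>\<xi>. \<epsilon> *\<^sub>R h \<xi>)"
  have phiW: "W 0 \<phi>" unfolding \<phi>_def by (rule W_scaleR(1)[OF hW])
  have aphi: "a = exp (\<eta> * T / 4) * hs_norm 0 \<phi>" unfolding \<phi>_def a(1) W_scaleR(2)[OF hW] ..
  have [measurable]: "h \<in> borel_measurable lborel" using hW unfolding W_def by simp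
  have Wu: "\<And>t. t \<in> {0..T} \<Longrightarrow> W 0 (u t)" using CHs_W[OF uC] by blast
  have boot: "\<forall>t\<in>{0..T}. hs_norm 0 (u t) \<le> 2 * a"
    by (rule bootstrap[OF eta T uC mild[folded \<phi>_def] phiW aphi a(2) small])
  have Sphi: "(\<lambda>\<xi>. S0sym \<eta> t \<xi> * \<phi> \<xi>) = (\<lambda>\<xi>. \<epsilon> *\<^sub>R V t \<xi>)" for t
    unfolding \<phi>_def V_def by (auto simp: scaleR_conv_of_real algebra_simps)
  have first: "W 0 (\<lambda>\<xi>. u t \<xi> - \<epsilon> *\<^sub>R V t \<xi>) \<and> hs_norm 0 (\<lambda>\<xi>. u t \<xi> - \<epsilon> *\<^sub>R V t \<xi>) \<le> KK \<eta> T * (2 * a)\<^sup>2"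
    if t: "t \<in> {0..T}" for t
  proof -
    have tt: "0 \<le> t" "t \<le> T" using t by auto
    have ut[measurable]: "u t \<in> borel_measurable lborel" using Wu[OF t] unfolding W_def by simp
    have ub: "W 0 (u \<tau>) \<and> hs_norm 0 (u \<tau>) \<le> 2 * a" if "\<tau> \<in> {0..t}" for \<tau>
      using that tt Wu boot by auto
    note D = mild_diff_bound[OF eta tt mild[folded \<phi>_def] phiW ut ub]
    have Sphi': "S0sym \<eta> t \<xi> * \<phi> \<xi> = \<epsilon> *\<^sub>R V t \<xi>" for \<xi> using Sphi[of t] by metis
    show ?thesis using D by (simp only: Sphi')
  qed
  then show "W 0 (\<lambda>\<xi>. u t \<xi> - \<epsilon> *\<^sub>R V t \<xi>)" "hs_norm 0 (\<lambda>\<xi>. u t \<xi> - \<epsilon> *\<^sub>R V t \<xi>) \<le> KK \<eta> T * (2 * a)\<^sup>2"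
    using t by auto
  define U' where "U' = (\<lambda>\<tau> \<xi>. \<epsilon> *\<^sub>R V \<tau> \<xi>)"
  have VW: "W 0 (V \<tau>) \<and> hs_norm 0 (V \<tau>) \<le> exp (\<eta> * T / 4) * hs_norm 0 h" if "\<tau> \<in> {0..T}" for \<tau>
    using Sphi_bound[OF eta _ _ hW, of \<tau>] that unfolding V_def by auto
  have U'W: "W 0 (U' \<tau>) \<and> hs_norm 0 (U' \<tau>) \<le> a" if "\<tau> \<in> {0..T}" for \<tau>
  proof -
    have "hs_norm 0 (U' \<tau>) = \<bar>\<epsilon>\<bar> * hs_norm 0 (V \<tau>)" unfolding U'_def using W_scaleR(2) VW[OF that] by blast
    also have "\<dots> \<le> \<bar>\<epsilon>\<bar> * (exp (\<eta> * T / 4) * hs_norm 0 h)" using VW[OF that] by (intro mult_left_mono) auto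
    finally show ?thesis unfolding U'_def a(1) using W_scaleR(1) VW[OF that] by (auto simp: algebra_simps)
  qed
  have tt: "0 \<le> t" "t \<le> T" using t by auto
  define d where "d = KK \<eta> T * (2 * a)\<^sup>2"
  have d: "d \<ge> 0" unfolding d_def using KK_nn by simp
  have Gb: "cmod (nonlin u \<tau> \<xi> - nonlin U' \<tau> \<xi>) \<le> \<bar>\<xi>\<bar> * (d * (3 * a) / (4 * pi))" if "\<tau> \<in> {0..t}" for \<tau> \<xi>
  proof -
    have \<tau>: "\<tau> \<in> {0..T}" using that tt by auto
    have "cmod (nonlin u \<tau> \<xi> - nonlin U' \<tau> \<xi>) \<le> \<bar>\<xi>\<bar> / (4 * pi) * (hs_norm 0 (\<lambda>\<zeta>. u \<tau> \<zeta> - U' \<tau> \<zeta>) * (hs_norm 0 (u \<tau>) + hs_norm 0 (U' \<tau>)))"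
      using nonlin_diff[where u=u and v=U' and \<tau>=\<tau> and \<xi>=\<xi>] Wu[OF \<tau>] U'W[OF \<tau>] by blast
    also have "\<dots> \<le> \<bar>\<xi>\<bar> / (4 * pi) * (d * (2 * a + a))"
    proof (intro mult_left_mono mult_mono add_mono)
      show "hs_norm 0 (\<lambda>\<zeta>. u \<tau> \<zeta> - U' \<tau> \<zeta>) \<le> d" using first[OF \<tau>] unfolding d_def U'_def by simp
      show "hs_norm 0 (u \<tau>) \<le> 2 * a" using boot \<tau> by auto
      show "hs_norm 0 (U' \<tau>) \<le> a" using U'W[OF \<tau>] by auto
    qed (use d in auto)
    finally show ?thesis by simp
  qed
  have ut[measurable]: "u t \<in> borel_measurable lborel" using Wu[OF t] unfolding W_def by simp
  note Qm[measurable]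
  have Vt[measurable]: "V t \<in> borel_measurable lborel" unfolding V_def by measurable
  have ae: "AE \<xi> in lborel. set_integrable lborel {0..t} (\<lambda>\<tau>. S0sym \<eta> (t - \<tau>) \<xi> * (nonlin u \<tau> \<xi> - nonlin U' \<tau> \<xi>))
      \<and> cmod (u t \<xi> - \<epsilon> *\<^sub>R V t \<xi> + \<epsilon>\<^sup>2 *\<^sub>R Q t \<xi>) = cmod (LINT \<tau>:{0..t}|lborel. S0sym \<eta> (t - \<tau>) \<xi> * (nonlin u \<tau> \<xi> - nonlin U' \<tau> \<xi>))"
    using mild_at[OF mild t]
  proof eventually_elim
    case (elim \<xi>)
    have nU: "nonlin U' \<tau> \<xi> = \<epsilon>\<^sup>2 *\<^sub>R nonlin V \<tau> \<xi>" for \<tau> unfolding U'_def by (rule nonlin_scale)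
    have si1: "set_integrable lborel {0..t} (\<lambda>\<tau>. S0sym \<eta> (t - \<tau>) \<xi> * nonlin u \<tau> \<xi>)" using elim by blast
    have si2: "set_integrable lborel {0..t} (\<lambda>\<tau>. S0sym \<eta> (t - \<tau>) \<xi> * nonlin U' \<tau> \<xi>)"
      unfolding nU by (rule set_integrable_scaleR'[OF Qsi])
    have e1: "u t \<xi> = \<epsilon> *\<^sub>R V t \<xi> - (LINT \<tau>:{0..t}|lborel. S0sym \<eta> (t - \<tau>) \<xi> * nonlin u \<tau> \<xi>)"
      using elim Sphi[of t] unfolding \<phi>_def by (metis (no_types, lifting))
    have e2: "\<epsilon>\<^sup>2 *\<^sub>R Q t \<xi> = (LINT \<tau>:{0..t}|lborel. S0sym \<eta> (t - \<tau>) \<xi> * nonlin U' \<tau> \<xi>)"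
      unfolding nU Q_def set_int_scaleR ..
    have e3: "(LINT \<tau>:{0..t}|lborel. S0sym \<eta> (t - \<tau>) \<xi> * (nonlin u \<tau> \<xi> - nonlin U' \<tau> \<xi>))
       = (LINT \<tau>:{0..t}|lborel. S0sym \<eta> (t - \<tau>) \<xi> * nonlin u \<tau> \<xi>) - (LINT \<tau>:{0..t}|lborel. S0sym \<eta> (t - \<tau>) \<xi> * nonlin U' \<tau> \<xi>)"
      unfolding right_diff_distrib by (rule set_integral_diff(2)[OF si1 si2])
    have "set_integrable lborel {0..t} (\<lambda>\<tau>. S0sym \<eta> (t - \<tau>) \<xi> * (nonlin u \<tau> \<xi> - nonlin U' \<tau> \<xi>))"
      unfolding right_diff_distrib by (rule set_integral_diff(1)[OF si1 si2])
    moreover have "u t \<xi> - \<epsilon> *\<^sub>R V t \<xi> + \<epsilon>\<^sup>2 *\<^sub>R Q t \<xi> = - (LINT \<tau>:{0..t}|lborel. S0sym \<eta> (t - \<tau>) \<xi> * (nonlin u \<tau> \<xi> - nonlin U' \<tau> \<xi>))"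
      unfolding e3 e2 using e1 by simp
    ultimately show ?case by (simp only: norm_minus_cancel)
  qed
  have M: "d * (3 * a) / (4 * pi) \<ge> 0" using d a(2) by simp
  note r = duh_L2[OF eta tt M _ ae Gb]
  show "W 0 (\<lambda>\<xi>. u t \<xi> - \<epsilon> *\<^sub>R V t \<xi> + \<epsilon>\<^sup>2 *\<^sub>R Q t \<xi>)" by (rule r(1)) measurable
  have "hs_norm 0 (\<lambda>\<xi>. u t \<xi> - \<epsilon> *\<^sub>R V t \<xi> + \<epsilon>\<^sup>2 *\<^sub>R Q t \<xi>) \<le> d * (3 * a) / (4 * pi) * hs_norm 0 (\<lambda>\<xi>. complex_of_real (kap \<eta> T \<xi>))"
    by (rule r(2)) measurable
  then show "hs_norm 0 (\<lambda>\<xi>. u t \<xi> - \<epsilon> *\<^sub>R V t \<xi> + \<epsilon>\<^sup>2 *\<^sub>R Q t \<xi>) \<le> KK \<eta> T * (KK \<eta> T * (2 * a)\<^sup>2 * (3 * a))"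
    unfolding KK_def d_def by (simp add: field_simps)
qed

lemma Hs_scaleR: assumes "h \<in> Hs s" shows "(\<lambda>\<zeta>. c *\<^sub>R h \<zeta>) \<in> Hs s"
proof -
  have [measurable]: "h \<in> borel_measurable lborel" and i: "integrable lborel (\<lambda>\<xi>. (1 + \<xi>\<^sup>2) powr s * (cmod (h \<xi>))\<^sup>2)"
    and ae: "AE \<xi> in lborel. h (- \<xi>) = cnj (h \<xi>)" using assms unfolding Hs_def by auto
  have "integrable lborel (\<lambda>\<xi>. c\<^sup>2 * ((1 + \<xi>\<^sup>2) powr s * (cmod (h \<xi>))\<^sup>2))" using i by (rule integrable_mult_right)
  then have "integrable lborel (\<lambda>\<xi>. (1 + \<xi>\<^sup>2) powr s * (cmod (c *\<^sub>R h \<xi>))\<^sup>2)"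
    by (simp add: power_mult_distrib algebra_simps)
  moreover have "AE \<xi> in lborel. c *\<^sub>R h (- \<xi>) = cnj (c *\<^sub>R h \<xi>)" using ae by eventually_elim simp
  ultimately show ?thesis unfolding Hs_def by simp
qed

lemma Hs_zero: "(\<lambda>\<zeta>. 0) \<in> Hs s" unfolding Hs_def by simp

lemma zero_smooth: "smooth_solution \<eta> T (\<lambda>\<zeta>. 0) (\<lambda>t \<xi>. 0)"
proof -
  have n0: "nonlin (\<lambda>t \<xi>. 0) \<tau> \<xi> = 0" for \<tau> \<xi> unfolding nonlin_def by simp
  show ?thesis unfolding smooth_solution_def mild_solution_def CHs_def
    by (simp add: n0 Hs_zero set_integrable_def)
qed

lemma CHs_hs_bdd:
  assumes "A \<in> CHs T s" shows "\<exists>B. \<forall>t\<in>{0..T}. W s (A t) \<and> hs_norm s (A t) \<le> B"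
  using CHs_bdd[OF assms] CHs_W[OF assms] by blast

lemma chs_pr3:
  assumes A: "A \<in> CHs T s" and B: "B \<in> CHs T s" and C: "C \<in> CHs T s" and t: "t \<in> {0..T}" and psi: "W s \<psi>"
    and M: "chs_norm T s (\<lambda>t \<xi>. A t \<xi> - B t \<xi> - C t \<xi>) \<le> M"
  shows "\<bar>pr s (A t) \<psi> - pr s (B t) \<psi> - pr s (C t) \<psi>\<bar> \<le> M * hs_norm s \<psi>"
proof -
  obtain bA where bA: "\<forall>t\<in>{0..T}. W s (A t) \<and> hs_norm s (A t) \<le> bA" using CHs_hs_bdd[OF A] by blast
  obtain bB where bB: "\<forall>t\<in>{0..T}. W s (B t) \<and> hs_norm s (B t) \<le> bB" using CHs_hs_bdd[OF B] by blast
  obtain bC where bC: "\<forall>t\<in>{0..T}. W s (C t) \<and> hs_norm s (C t) \<le> bC" using CHs_hs_bdd[OF C] by blast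
  have X: "W s (\<lambda>\<xi>. A t \<xi> - B t \<xi> - C t \<xi>) \<and> hs_norm s (\<lambda>\<xi>. A t \<xi> - B t \<xi> - C t \<xi>) \<le> bA + bB + bC" if "t \<in> {0..T}" for t
  proof -
    have wA: "W s (A t)" and hA: "hs_norm s (A t) \<le> bA" using bA that by auto
    have wB: "W s (B t)" and hB: "hs_norm s (B t) \<le> bB" using bB that by auto
    have wC: "W s (C t)" and hC: "hs_norm s (C t) \<le> bC" using bC that by auto
    have w1: "W s (\<lambda>\<xi>. A t \<xi> - B t \<xi>)" by (rule W_diff[OF wA wB])
    have t1: "hs_norm s (\<lambda>\<xi>. A t \<xi> - B t \<xi> - C t \<xi>) \<le> hs_norm s (\<lambda>\<xi>. A t \<xi> - B t \<xi>) + hs_norm s (C t)"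
      by (rule hs_triangle_diff[OF w1 wC])
    have t2: "hs_norm s (\<lambda>\<xi>. A t \<xi> - B t \<xi>) \<le> hs_norm s (A t) + hs_norm s (B t)"
      by (rule hs_triangle_diff[OF wA wB])
    have "W s (\<lambda>\<xi>. A t \<xi> - B t \<xi> - C t \<xi>)" by (rule W_diff[OF w1 wC])
    then show ?thesis using t1 t2 hA hB hC by linarith
  qed
  have "hs_norm s (\<lambda>\<xi>. A t \<xi> - B t \<xi> - C t \<xi>) \<le> chs_norm T s (\<lambda>t \<xi>. A t \<xi> - B t \<xi> - C t \<xi>)"
    by (rule chs_upper[OF _ t]) (use X in blast)
  also note M
  finally have hM: "hs_norm s (\<lambda>\<xi>. A t \<xi> - B t \<xi> - C t \<xi>) \<le> M" .
  have wA: "W s (A t)" and wB: "W s (B t)" and wC: "W s (C t)" using bA bB bC t by auto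
  have e: "pr s (\<lambda>\<xi>. A t \<xi> - B t \<xi> - C t \<xi>) \<psi> = pr s (A t) \<psi> - pr s (B t) \<psi> - pr s (C t) \<psi>"
    using pr_diff[OF W_diff[OF wA wB] wC psi] pr_diff[OF wA wB psi] by simp
  have "\<bar>pr s (\<lambda>\<xi>. A t \<xi> - B t \<xi> - C t \<xi>) \<psi>\<bar> \<le> hs_norm s (\<lambda>\<xi>. A t \<xi> - B t \<xi> - C t \<xi>) * hs_norm s \<psi>"
    using W_pr(2) X[OF t] psi by blast
  also have "\<dots> \<le> M * hs_norm s \<psi>" using hM by (intro mult_right_mono) auto
  finally show ?thesis unfolding e .
qed

lemma chs_pr_lin:
  assumes A: "A \<in> CHs T s" and B: "B \<in> CHs T s" and C: "C \<in> CHs T s" and t: "t \<in> {0..T}" and psi: "W s \<psi>"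
    and z: "chs_norm T s (\<lambda>t \<xi>. A t \<xi> - (a *\<^sub>R B t \<xi> + b *\<^sub>R C t \<xi>)) = 0"
  shows "pr s (A t) \<psi> = a * pr s (B t) \<psi> + b * pr s (C t) \<psi>"
proof -
  obtain bA where bA: "\<forall>t\<in>{0..T}. W s (A t) \<and> hs_norm s (A t) \<le> bA" using CHs_hs_bdd[OF A] by blast
  obtain bB where bB: "\<forall>t\<in>{0..T}. W s (B t) \<and> hs_norm s (B t) \<le> bB" using CHs_hs_bdd[OF B] by blast
  obtain bC where bC: "\<forall>t\<in>{0..T}. W s (C t) \<and> hs_norm s (C t) \<le> bC" using CHs_hs_bdd[OF C] by blast
  have X: "W s (\<lambda>\<xi>. A t \<xi> - (a *\<^sub>R B t \<xi> + b *\<^sub>R C t \<xi>)) \<and> hs_norm s (\<lambda>\<xi>. A t \<xi> - (a *\<^sub>R B t \<xi> + b *\<^sub>R C t \<xi>)) \<le> bA + (\<bar>a\<bar> * bB + \<bar>b\<bar> * bC)"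
    if "t \<in> {0..T}" for t
  proof -
    have wA: "W s (A t)" and hA: "hs_norm s (A t) \<le> bA" using bA that by auto
    have wB0: "W s (B t)" and hB: "hs_norm s (B t) \<le> bB" using bB that by auto
    have wC0: "W s (C t)" and hC: "hs_norm s (C t) \<le> bC" using bC that by auto
    have wB: "W s (\<lambda>\<xi>. a *\<^sub>R B t \<xi>)" and wC: "W s (\<lambda>\<xi>. b *\<^sub>R C t \<xi>)" using W_scaleR(1) wB0 wC0 by blast+
    have wBC: "W s (\<lambda>\<xi>. a *\<^sub>R B t \<xi> + b *\<^sub>R C t \<xi>)" using W_add[OF wB wC] .
    have t1: "hs_norm s (\<lambda>\<xi>. A t \<xi> - (a *\<^sub>R B t \<xi> + b *\<^sub>R C t \<xi>)) \<le> hs_norm s (A t) + hs_norm s (\<lambda>\<xi>. a *\<^sub>R B t \<xi> + b *\<^sub>R C t \<xi>)"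
      by (rule hs_triangle_diff[OF wA wBC])
    have t2: "hs_norm s (\<lambda>\<xi>. a *\<^sub>R B t \<xi> + b *\<^sub>R C t \<xi>) \<le> hs_norm s (\<lambda>\<xi>. a *\<^sub>R B t \<xi>) + hs_norm s (\<lambda>\<xi>. b *\<^sub>R C t \<xi>)"
      by (rule hs_triangle[OF wB wC])
    have t3: "hs_norm s (\<lambda>\<xi>. a *\<^sub>R B t \<xi>) = \<bar>a\<bar> * hs_norm s (B t)" "hs_norm s (\<lambda>\<xi>. b *\<^sub>R C t \<xi>) = \<bar>b\<bar> * hs_norm s (C t)"
      using W_scaleR(2) wB0 wC0 by blast+
    have t4: "\<bar>a\<bar> * hs_norm s (B t) \<le> \<bar>a\<bar> * bB" "\<bar>b\<bar> * hs_norm s (C t) \<le> \<bar>b\<bar> * bC"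
      using hB hC by (intro mult_left_mono; simp)+
    have "W s (\<lambda>\<xi>. A t \<xi> - (a *\<^sub>R B t \<xi> + b *\<^sub>R C t \<xi>))" by (rule W_diff[OF wA wBC])
    then show ?thesis using t1 t2 t3 t4 hA by linarith
  qed
  have "hs_norm s (\<lambda>\<xi>. A t \<xi> - (a *\<^sub>R B t \<xi> + b *\<^sub>R C t \<xi>)) \<le> chs_norm T s (\<lambda>t \<xi>. A t \<xi> - (a *\<^sub>R B t \<xi> + b *\<^sub>R C t \<xi>))"
    by (rule chs_upper[OF _ t]) (use X in blast)
  then have "hs_norm s (\<lambda>\<xi>. A t \<xi> - (a *\<^sub>R B t \<xi> + b *\<^sub>R C t \<xi>)) = 0" using z hs_norm_nn[of s] by (simp add: order_antisym)
  then have "pr s (\<lambda>\<xi>. A t \<xi> - (a *\<^sub>R B t \<xi> + b *\<^sub>R C t \<xi>)) \<psi> = 0" using pr_zero_norm X[OF t] psi by blast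
  moreover have "pr s (\<lambda>\<xi>. A t \<xi> - (a *\<^sub>R B t \<xi> + b *\<^sub>R C t \<xi>)) \<psi> = pr s (A t) \<psi> - (a * pr s (B t) \<psi> + b * pr s (C t) \<psi>)"
  proof -
    have wA: "W s (A t)" and wB0: "W s (B t)" and wC0: "W s (C t)" using bA bB bC t by auto
    have wB: "W s (\<lambda>\<xi>. a *\<^sub>R B t \<xi>)" and wC: "W s (\<lambda>\<xi>. b *\<^sub>R C t \<xi>)" using W_scaleR(1) wB0 wC0 by blast+
    have "pr s (\<lambda>\<xi>. A t \<xi> - (a *\<^sub>R B t \<xi> + b *\<^sub>R C t \<xi>)) \<psi> = pr s (A t) \<psi> - pr s (\<lambda>\<xi>. a *\<^sub>R B t \<xi> + b *\<^sub>R C t \<xi>) \<psi>"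
      by (rule pr_diff[OF wA W_add[OF wB wC] psi])
    also have "\<dots> = pr s (A t) \<psi> - (pr s (\<lambda>\<xi>. a *\<^sub>R B t \<xi>) \<psi> + pr s (\<lambda>\<xi>. b *\<^sub>R C t \<xi>) \<psi>)"
      by (simp only: pr_add[OF wB wC psi])
    finally show ?thesis by (simp only: pr_scaleR)
  qed
  ultimately show ?thesis by simp
qed

lemma deriv_from_eps:
  fixes f :: "real \<Rightarrow> real"
  assumes "\<And>e. e > 0 \<Longrightarrow> \<exists>d>0. \<forall>y. \<bar>y - x\<bar> < d \<longrightarrow> \<bar>f y - f x - (y - x) * D\<bar> \<le> e * \<bar>y - x\<bar>"
  shows "(f has_real_derivative D) (at x)"
  unfolding has_field_derivative_def has_derivative_within_alt
  using assms by (auto simp: bounded_linear_mult_right mult.commute)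

lemma final_real:
  fixes A B :: real
  assumes H: "\<And>e. e > 0 \<Longrightarrow> \<exists>\<epsilon>0>0. \<forall>\<epsilon>. 0 < \<epsilon> \<and> \<epsilon> < \<epsilon>0 \<longrightarrow> \<bar>\<epsilon> * A + \<epsilon>\<^sup>2 * B\<bar> \<le> e * \<epsilon>\<^sup>2"
  shows "B = 0"
proof -
  have H': "\<bar>A + \<epsilon> * B\<bar> \<le> e * \<epsilon>" if "e > 0" "0 < \<epsilon>" "\<epsilon> < \<epsilon>0" "\<forall>\<epsilon>. 0 < \<epsilon> \<and> \<epsilon> < \<epsilon>0 \<longrightarrow> \<bar>\<epsilon> * A + \<epsilon>\<^sup>2 * B\<bar> \<le> e * \<epsilon>\<^sup>2"
    for e \<epsilon> \<epsilon>0
  proof -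
    have "\<bar>\<epsilon> * A + \<epsilon>\<^sup>2 * B\<bar> \<le> e * \<epsilon>\<^sup>2" using that(4) that(2,3) by blast
    moreover have "\<epsilon> * A + \<epsilon>\<^sup>2 * B = \<epsilon> * (A + \<epsilon> * B)" by (simp add: power2_eq_square algebra_simps)
    moreover have "\<bar>\<epsilon> * (A + \<epsilon> * B)\<bar> = \<epsilon> * \<bar>A + \<epsilon> * B\<bar>" using that(2) by (simp add: abs_mult)
    moreover have "e * \<epsilon>\<^sup>2 = \<epsilon> * (e * \<epsilon>)" by (simp add: power2_eq_square)
    ultimately have "\<epsilon> * \<bar>A + \<epsilon> * B\<bar> \<le> \<epsilon> * (e * \<epsilon>)" by simp
    then show ?thesis using that(2) by simp
  qed
  have A: "A = 0"
  proof (rule ccontr)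
    assume "A \<noteq> 0"
    obtain \<epsilon>0 where e0: "\<epsilon>0 > 0" "\<forall>\<epsilon>. 0 < \<epsilon> \<and> \<epsilon> < \<epsilon>0 \<longrightarrow> \<bar>\<epsilon> * A + \<epsilon>\<^sup>2 * B\<bar> \<le> 1 * \<epsilon>\<^sup>2" using H[of 1] by auto
    define \<epsilon> where "\<epsilon> = min (\<epsilon>0 / 2) (\<bar>A\<bar> / (2 * (1 + \<bar>B\<bar>)))"
    have "\<epsilon> \<le> \<epsilon>0 / 2" unfolding \<epsilon>_def by (rule min.cobounded1)
    moreover have "0 < \<epsilon>" using e0 \<open>A \<noteq> 0\<close> unfolding \<epsilon>_def by (simp add: add_pos_nonneg)
    ultimately have ep: "0 < \<epsilon>" "\<epsilon> < \<epsilon>0" using e0 by auto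
    have "\<bar>A + \<epsilon> * B\<bar> \<le> 1 * \<epsilon>" by (rule H'[OF _ ep e0(2)]) simp
    moreover have "\<bar>A\<bar> \<le> \<bar>A + \<epsilon> * B\<bar> + \<bar>\<epsilon> * B\<bar>" using abs_triangle_ineq4[of "A + \<epsilon> * B" "\<epsilon> * B"] by simp
    moreover have "\<bar>\<epsilon> * B\<bar> = \<epsilon> * \<bar>B\<bar>" using ep by (simp add: abs_mult)
    ultimately have "\<bar>A\<bar> \<le> \<epsilon> * (1 + \<bar>B\<bar>)" by (simp add: algebra_simps)
    also have "\<dots> \<le> \<bar>A\<bar> / (2 * (1 + \<bar>B\<bar>)) * (1 + \<bar>B\<bar>)" by (intro mult_right_mono) (auto simp: \<epsilon>_def)
    also have "\<dots> = \<bar>A\<bar> / 2"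
    proof -
      have "0 \<le> \<bar>B\<bar>" by simp
      then have "1 + \<bar>B\<bar> \<noteq> 0" by linarith
      then show ?thesis by (simp add: field_simps)
    qed
    finally show False using \<open>A \<noteq> 0\<close> by simp
  qed
  show "B = 0"
  proof (rule ccontr)
    assume "B \<noteq> 0"
    obtain \<epsilon>0 where e0: "\<epsilon>0 > 0" "\<forall>\<epsilon>. 0 < \<epsilon> \<and> \<epsilon> < \<epsilon>0 \<longrightarrow> \<bar>\<epsilon> * A + \<epsilon>\<^sup>2 * B\<bar> \<le> (\<bar>B\<bar> / 2) * \<epsilon>\<^sup>2"
      using H[of "\<bar>B\<bar> / 2"] \<open>B \<noteq> 0\<close> by auto
    have ep: "0 < \<epsilon>0 / 2" "\<epsilon>0 / 2 < \<epsilon>0" using e0 by auto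
    have "\<bar>A + \<epsilon>0 / 2 * B\<bar> \<le> (\<bar>B\<bar> / 2) * (\<epsilon>0 / 2)" by (rule H'[OF _ ep e0(2)]) (use \<open>B \<noteq> 0\<close> in simp)
    then have "\<epsilon>0 / 2 * \<bar>B\<bar> \<le> (\<bar>B\<bar> / 2) * (\<epsilon>0 / 2)" using A ep by (simp add: abs_mult)
    then show False using \<open>B \<noteq> 0\<close> ep by (simp add: field_simps)
  qed
qed

definition Vf :: "real \<Rightarrow> (real \<Rightarrow> complex) \<Rightarrow> real \<Rightarrow> real \<Rightarrow> complex" where
  "Vf \<eta> h = (\<lambda>\<tau> \<xi>. S0sym \<eta> \<tau> \<xi> * h \<xi>)"
definition Qf :: "real \<Rightarrow> (real \<Rightarrow> complex) \<Rightarrow> real \<Rightarrow> real \<Rightarrow> complex" where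
  "Qf \<eta> h = (\<lambda>t \<xi>. LINT \<tau>:{0..t}|lborel. S0sym \<eta> (t - \<tau>) \<xi> * nonlin (Vf \<eta> h) \<tau> \<xi>)"

lemma Q_W:
  assumes eta: "\<eta> > 0" and t: "t \<in> {0..T}" and hW: "W 0 h"
    and Qm: "Qf \<eta> h t \<in> borel_measurable lborel"
    and Qsi: "\<And>\<xi>. set_integrable lborel {0..t} (\<lambda>\<tau>. S0sym \<eta> (t - \<tau>) \<xi> * nonlin (Vf \<eta> h) \<tau> \<xi>)"
  shows "W 0 (Qf \<eta> h t)"
proof -
  have tt: "0 \<le> t" "t \<le> T" using t by auto
  define M where "M = (exp (\<eta> * T / 4) * hs_norm 0 h)\<^sup>2 / (4 * pi)"
  have M: "M \<ge> 0" unfolding M_def by simp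
  have b: "cmod (nonlin (Vf \<eta> h) \<tau> \<xi>) \<le> \<bar>\<xi>\<bar> * M" if "\<tau> \<in> {0..t}" for \<tau> \<xi>
  proof -
    have V: "W 0 (Vf \<eta> h \<tau>)" "hs_norm 0 (Vf \<eta> h \<tau>) \<le> exp (\<eta> * T / 4) * hs_norm 0 h"
      using Sphi_bound[OF eta _ _ hW, of \<tau>] that tt unfolding Vf_def by auto
    have "cmod (nonlin (Vf \<eta> h) \<tau> \<xi>) \<le> \<bar>\<xi>\<bar> / (4 * pi) * (hs_norm 0 (Vf \<eta> h \<tau>))\<^sup>2"
      using nonlin_bound[where w="Vf \<eta> h" and \<tau>=\<tau> and \<xi>=\<xi>] V(1) by blast
    also have "\<dots> \<le> \<bar>\<xi>\<bar> / (4 * pi) * (exp (\<eta> * T / 4) * hs_norm 0 h)\<^sup>2"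
      using V(2) by (intro mult_left_mono power_mono) auto
    finally show ?thesis unfolding M_def by simp
  qed
  have ae: "AE \<xi> in lborel. set_integrable lborel {0..t} (\<lambda>\<tau>. S0sym \<eta> (t - \<tau>) \<xi> * nonlin (Vf \<eta> h) \<tau> \<xi>)
       \<and> cmod (Qf \<eta> h t \<xi>) = cmod (LINT \<tau>:{0..t}|lborel. S0sym \<eta> (t - \<tau>) \<xi> * nonlin (Vf \<eta> h) \<tau> \<xi>)"
    using Qsi by (simp add: Qf_def)
  show ?thesis by (rule duh_L2(1)[OF eta tt M Qm ae b])
qed

context
  fixes \<eta> s T r r' :: real and F :: "(real \<Rightarrow> complex) \<Rightarrow> real \<Rightarrow> real \<Rightarrow> complex"
    and DF :: "(real \<Rightarrow> complex) \<Rightarrow> (real \<Rightarrow> complex) \<Rightarrow> real \<Rightarrow> real \<Rightarrow> complex"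
    and D2 :: "(real \<Rightarrow> complex) \<Rightarrow> (real \<Rightarrow> complex) \<Rightarrow> real \<Rightarrow> real \<Rightarrow> complex"
    and h \<psi> :: "real \<Rightarrow> complex" and t :: real
  assumes eta: "\<eta> > 0" and s0: "s \<le> 0" and T: "T > 0"
    and r: "r > 0" and flC: "\<forall>\<phi>\<in>Hs s. hs_norm s \<phi> < r \<longrightarrow> F \<phi> \<in> CHs T s"
    and flS: "\<forall>\<phi>. (\<forall>\<sigma>. \<phi> \<in> Hs \<sigma>) \<and> hs_norm s \<phi> < r \<longrightarrow>
               smooth_solution \<eta> T \<phi> (F \<phi>)
             \<and> (\<forall>w. smooth_solution \<eta> T \<phi> w \<longrightarrow>
                    (\<forall>t\<in>{0..T}. hs_norm s (\<lambda>\<xi>. w t \<xi> - F \<phi> t \<xi>) = 0))"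
    and r': "r' > 0" and DFp: "\<forall>\<phi>\<in>Hs s. hs_norm s \<phi> < r' \<longrightarrow> frechet_deriv_at s T F \<phi> (DF \<phi>)"
    and D2b: "\<forall>h\<in>Hs s. bdd_lin_op s T (D2 h)"
    and D2lin: "\<forall>h\<in>Hs s. \<forall>h'\<in>Hs s. \<forall>g\<in>Hs s. \<forall>a b :: real.
           chs_norm T s (\<lambda>t \<xi>. D2 (\<lambda>\<zeta>. a *\<^sub>R h \<zeta> + b *\<^sub>R h' \<zeta>) g t \<xi>
                                 - (a *\<^sub>R D2 h g t \<xi> + b *\<^sub>R D2 h' g t \<xi>)) = 0"
    and D2ap: "\<forall>\<epsilon>>0. \<exists>\<delta>>0. \<forall>h\<in>Hs s. hs_norm s h < \<delta> \<longrightarrow>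
           (\<forall>g\<in>Hs s. chs_norm T s (\<lambda>t \<xi>. DF h g t \<xi> - DF (\<lambda>_. 0) g t \<xi> - D2 h g t \<xi>)
                        \<le> \<epsilon> * hs_norm s h * hs_norm s g)"
    and hsm: "\<forall>\<sigma>. h \<in> Hs \<sigma>" and h0: "hs_norm 0 h > 0"
    and t: "t \<in> {0..T}" and psi: "W s \<psi>"
    and Qm: "Qf \<eta> h t \<in> borel_measurable lborel"
    and Qsi: "\<And>\<xi>. set_integrable lborel {0..t} (\<lambda>\<tau>. S0sym \<eta> (t - \<tau>) \<xi> * nonlin (Vf \<eta> h) \<tau> \<xi>)"
begin

definition "ff x = pr s (F (\<lambda>\<zeta>. x *\<^sub>R h \<zeta>) t) \<psi>"
definition "rho = min r r' / (hs_norm s h + 1)"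
definition "al = pr s (DF (\<lambda>_. 0) h t) \<psi>"
definition "be = pr s (D2 h h t) \<psi>"
definition "ga = pr s (Vf \<eta> h t) \<psi>"
definition "qq = pr s (Qf \<eta> h t) \<psi>"

lemma hs: "h \<in> Hs s" using hsm by blast
lemma hsc: "(\<lambda>\<zeta>. x *\<^sub>R h \<zeta>) \<in> Hs s" by (rule Hs_scaleR[OF hs])
lemma hsc_norm: "hs_norm s (\<lambda>\<zeta>. x *\<^sub>R h \<zeta>) = \<bar>x\<bar> * hs_norm s h"
  using W_scaleR(2)[OF Hs_W[OF hs]] .
lemma hp1: "hs_norm s h + 1 > 0" using hs_norm_nn[of s h] by linarith

lemma rho_pos: "rho > 0" unfolding rho_def using r r' by (simp add: add_nonneg_pos)

lemma small_norm:
  assumes "\<bar>x\<bar> < rho" shows "hs_norm s (\<lambda>\<zeta>. x *\<^sub>R h \<zeta>) < r" "hs_norm s (\<lambda>\<zeta>. x *\<^sub>R h \<zeta>) < r'"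
proof -
  have hn: "hs_norm s h \<ge> 0" by simp
  have "\<bar>x\<bar> * hs_norm s h \<le> \<bar>x\<bar> * (hs_norm s h + 1)" by (intro mult_left_mono) auto
  also have "\<dots> < rho * (hs_norm s h + 1)" using assms hp1 by (intro mult_strict_right_mono) auto
  also have "\<dots> = min r r'" unfolding rho_def using hp1 by simp
  finally show "hs_norm s (\<lambda>\<zeta>. x *\<^sub>R h \<zeta>) < r" "hs_norm s (\<lambda>\<zeta>. x *\<^sub>R h \<zeta>) < r'"
    unfolding hsc_norm by auto
qed

lemma F_C: "\<bar>x\<bar> < rho \<Longrightarrow> F (\<lambda>\<zeta>. x *\<^sub>R h \<zeta>) \<in> CHs T s"
  using flC hsc small_norm by blast

lemma frech: "\<bar>x\<bar> < rho \<Longrightarrow> frechet_deriv_at s T F (\<lambda>\<zeta>. x *\<^sub>R h \<zeta>) (DF (\<lambda>\<zeta>. x *\<^sub>R h \<zeta>))"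
  using DFp hsc small_norm by blast

lemma zero_eq: "(\<lambda>\<zeta>. 0 *\<^sub>R h \<zeta>) = (\<lambda>\<zeta>. 0)" by simp

lemma F0: "pr s (F (\<lambda>\<zeta>. 0) t) \<psi> = 0"
proof -
  have z: "(\<forall>\<sigma>. (\<lambda>\<zeta>::real. 0::complex) \<in> Hs \<sigma>) \<and> hs_norm s (\<lambda>\<zeta>. 0) < r" using Hs_zero r by simp
  have "hs_norm s (\<lambda>\<xi>. 0 - F (\<lambda>\<zeta>. 0) t \<xi>) = 0" using flS z zero_smooth t by blast
  moreover have FC: "F (\<lambda>\<zeta>. 0) \<in> CHs T s" using flC z Hs_zero by blast
  ultimately have "hs_norm s (F (\<lambda>\<zeta>. 0) t) = 0" using W_minus(2)[OF CHs_W[OF FC t]] by simp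
  then show ?thesis using pr_zero_norm CHs_W[OF FC t] psi by blast
qed

lemma DF_C: "\<bar>x\<bar> < rho \<Longrightarrow> g \<in> Hs s \<Longrightarrow> DF (\<lambda>\<zeta>. x *\<^sub>R h \<zeta>) g \<in> CHs T s"
  using frech unfolding frechet_deriv_at_def bdd_lin_op_def by blast

lemma deriv:
  assumes x: "\<bar>x\<bar> < rho"
  shows "(ff has_real_derivative pr s (DF (\<lambda>\<zeta>. x *\<^sub>R h \<zeta>) h t) \<psi>) (at x)"
proof (rule deriv_from_eps)
  fix e :: real assume e: "e > 0"
  define L where "L = DF (\<lambda>\<zeta>. x *\<^sub>R h \<zeta>)"
  have fr: "frechet_deriv_at s T F (\<lambda>\<zeta>. x *\<^sub>R h \<zeta>) L" unfolding L_def by (rule frech[OF x])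
  have LC: "\<And>g. g \<in> Hs s \<Longrightarrow> L g \<in> CHs T s" using fr unfolding frechet_deriv_at_def bdd_lin_op_def by blast
  have Llin: "\<forall>h\<in>Hs s. \<forall>g\<in>Hs s. \<forall>a b :: real.
        chs_norm T s (\<lambda>t \<xi>. L (\<lambda>\<zeta>. a *\<^sub>R h \<zeta> + b *\<^sub>R g \<zeta>) t \<xi> - (a *\<^sub>R L h t \<xi> + b *\<^sub>R L g t \<xi>)) = 0"
    using fr unfolding frechet_deriv_at_def bdd_lin_op_def by blast
  define K where "K = hs_norm s h * hs_norm s \<psi> + 1"
  have K: "K > 0" unfolding K_def by (simp add: add_nonneg_pos)
  obtain \<delta> where \<delta>: "\<delta> > 0" and fd: "\<forall>k\<in>Hs s. hs_norm s k < \<delta> \<longrightarrow>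
      chs_norm T s (\<lambda>t \<xi>. F (\<lambda>\<zeta>. x *\<^sub>R h \<zeta> + k \<zeta>) t \<xi> - F (\<lambda>\<zeta>. x *\<^sub>R h \<zeta>) t \<xi> - L k t \<xi>) \<le> e / K * hs_norm s k"
  proof -
    have "e / K > 0" using e K by simp
    then show ?thesis using fr unfolding frechet_deriv_at_def using that by blast
  qed
  define d where "d = min (\<delta> / (hs_norm s h + 1)) (rho - \<bar>x\<bar>)"
  have d: "d > 0" unfolding d_def using \<delta> x by (simp add: add_nonneg_pos)
  show "\<exists>d>0. \<forall>y. \<bar>y - x\<bar> < d \<longrightarrow> \<bar>ff y - ff x - (y - x) * pr s (DF (\<lambda>\<zeta>. x *\<^sub>R h \<zeta>) h t) \<psi>\<bar> \<le> e * \<bar>y - x\<bar>"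
  proof (intro exI[of _ d] conjI allI impI d)
    fix y assume y: "\<bar>y - x\<bar> < d"
    define k where "k = (\<lambda>\<zeta>. (y - x) *\<^sub>R h \<zeta>)"
    have kH: "k \<in> Hs s" unfolding k_def by (rule hsc)
    have kn: "hs_norm s k = \<bar>y - x\<bar> * hs_norm s h" unfolding k_def by (rule hsc_norm)
    have kd: "hs_norm s k < \<delta>"
    proof -
      have "\<bar>y - x\<bar> * hs_norm s h \<le> \<bar>y - x\<bar> * (hs_norm s h + 1)" by (intro mult_left_mono) auto
      also have "\<dots> < \<delta> / (hs_norm s h + 1) * (hs_norm s h + 1)"
        using y by (intro mult_strict_right_mono) (auto simp: d_def add_nonneg_pos)
      also have "\<dots> = \<delta>" using hp1 by simp
      finally show ?thesis unfolding kn .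
    qed
    have yr: "\<bar>y\<bar> < rho" using y unfolding d_def by auto
    have e1: "(\<lambda>\<zeta>. x *\<^sub>R h \<zeta> + k \<zeta>) = (\<lambda>\<zeta>. y *\<^sub>R h \<zeta>)" unfolding k_def by (auto simp: scaleR_left_distrib[symmetric])
    have c1: "chs_norm T s (\<lambda>t \<xi>. F (\<lambda>\<zeta>. y *\<^sub>R h \<zeta>) t \<xi> - F (\<lambda>\<zeta>. x *\<^sub>R h \<zeta>) t \<xi> - L k t \<xi>) \<le> e / K * hs_norm s k"
    proof -
      have c0: "chs_norm T s (\<lambda>t \<xi>. F (\<lambda>\<zeta>. x *\<^sub>R h \<zeta> + k \<zeta>) t \<xi> - F (\<lambda>\<zeta>. x *\<^sub>R h \<zeta>) t \<xi> - L k t \<xi>) \<le> e / K * hs_norm s k"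
        using fd kH kd by blast
      show ?thesis using c0 unfolding e1 .
    qed
    have p1: "\<bar>ff y - ff x - pr s (L k t) \<psi>\<bar> \<le> e / K * hs_norm s k * hs_norm s \<psi>"
      unfolding ff_def by (rule chs_pr3[OF F_C[OF yr] F_C[OF x] LC[OF kH] t psi c1])
    have "chs_norm T s (\<lambda>t \<xi>. L (\<lambda>\<zeta>. (y - x) *\<^sub>R h \<zeta> + 0 *\<^sub>R h \<zeta>) t \<xi> - ((y - x) *\<^sub>R L h t \<xi> + 0 *\<^sub>R L h t \<xi>)) = 0"
      using Llin hs by blast
    then have "chs_norm T s (\<lambda>t \<xi>. L k t \<xi> - ((y - x) *\<^sub>R L h t \<xi> + 0 *\<^sub>R L h t \<xi>)) = 0" unfolding k_def by simp
    from chs_pr_lin[OF LC[OF kH] LC[OF hs] LC[OF hs] t psi this]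
    have p2: "pr s (L k t) \<psi> = (y - x) * pr s (L h t) \<psi>" by simp
    have "e / K * hs_norm s k * hs_norm s \<psi> = e * \<bar>y - x\<bar> * ((hs_norm s h * hs_norm s \<psi>) / K)"
      unfolding kn by (simp add: field_simps)
    also have "\<dots> \<le> e * \<bar>y - x\<bar> * 1"
      using e K by (intro mult_left_mono) (auto simp: K_def)
    finally show "\<bar>ff y - ff x - (y - x) * pr s (DF (\<lambda>\<zeta>. x *\<^sub>R h \<zeta>) h t) \<psi>\<bar> \<le> e * \<bar>y - x\<bar>"
      using p1 p2 unfolding L_def by simp
  qed
qed

definition "K2 = (hs_norm s h)\<^sup>2 * hs_norm s \<psi>"

lemma K2_nn: "K2 \<ge> 0" unfolding K2_def by simp

lemma D2_C: "k \<in> Hs s \<Longrightarrow> g \<in> Hs s \<Longrightarrow> D2 k g \<in> CHs T s"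
  using D2b unfolding bdd_lin_op_def by blast

lemma gp:
  assumes e: "e > 0"
  shows "\<exists>\<delta>>0. \<forall>x. \<bar>x\<bar> < \<delta> \<longrightarrow> \<bar>pr s (DF (\<lambda>\<zeta>. x *\<^sub>R h \<zeta>) h t) \<psi> - al - x * be\<bar> \<le> e * \<bar>x\<bar> * K2"
proof -
  obtain \<delta>0 where \<delta>0: "\<delta>0 > 0" and ap: "\<forall>k\<in>Hs s. hs_norm s k < \<delta>0 \<longrightarrow>
           (\<forall>g\<in>Hs s. chs_norm T s (\<lambda>t \<xi>. DF k g t \<xi> - DF (\<lambda>_. 0) g t \<xi> - D2 k g t \<xi>)
                        \<le> e * hs_norm s k * hs_norm s g)"
    using D2ap e by blast
  define \<delta> where "\<delta> = min rho (\<delta>0 / (hs_norm s h + 1))"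
  have \<delta>: "\<delta> > 0" unfolding \<delta>_def using rho_pos \<delta>0 hp1 by simp
  show ?thesis
  proof (intro exI[of _ \<delta>] conjI allI impI \<delta>)
    fix x assume x: "\<bar>x\<bar> < \<delta>"
    define k where "k = (\<lambda>\<zeta>. x *\<^sub>R h \<zeta>)"
    have kH: "k \<in> Hs s" unfolding k_def by (rule hsc)
    have kn: "hs_norm s k = \<bar>x\<bar> * hs_norm s h" unfolding k_def by (rule hsc_norm)
    have xr: "\<bar>x\<bar> < rho" using x unfolding \<delta>_def by auto
    have kd: "hs_norm s k < \<delta>0"
    proof -
      have "\<bar>x\<bar> * hs_norm s h \<le> \<bar>x\<bar> * (hs_norm s h + 1)" by (intro mult_left_mono) auto
      also have "\<dots> < \<delta>0 / (hs_norm s h + 1) * (hs_norm s h + 1)"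
        using x hp1 by (intro mult_strict_right_mono) (auto simp: \<delta>_def)
      also have "\<dots> = \<delta>0" using hp1 by simp
      finally show ?thesis unfolding kn .
    qed
    have c: "chs_norm T s (\<lambda>t \<xi>. DF k h t \<xi> - DF (\<lambda>_. 0) h t \<xi> - D2 k h t \<xi>) \<le> e * hs_norm s k * hs_norm s h"
      using ap kH kd hs by blast
    have DF0C: "DF (\<lambda>_. 0) h \<in> CHs T s" using DF_C[of 0 h] hs rho_pos by simp
    have p1: "\<bar>pr s (DF k h t) \<psi> - al - pr s (D2 k h t) \<psi>\<bar> \<le> e * hs_norm s k * hs_norm s h * hs_norm s \<psi>"
      unfolding al_def by (rule chs_pr3[OF DF_C[OF xr hs, folded k_def] DF0C D2_C[OF kH hs] t psi c])
    have "chs_norm T s (\<lambda>t \<xi>. D2 (\<lambda>\<zeta>. x *\<^sub>R h \<zeta> + 0 *\<^sub>R h \<zeta>) h t \<xi> - (x *\<^sub>R D2 h h t \<xi> + 0 *\<^sub>R D2 h h t \<xi>)) = 0"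
      using D2lin hs by blast
    then have "chs_norm T s (\<lambda>t \<xi>. D2 k h t \<xi> - (x *\<^sub>R D2 h h t \<xi> + 0 *\<^sub>R D2 h h t \<xi>)) = 0" unfolding k_def by simp
    from chs_pr_lin[OF D2_C[OF kH hs] D2_C[OF hs hs] D2_C[OF hs hs] t psi this]
    have p2: "pr s (D2 k h t) \<psi> = x * be" unfolding be_def by simp
    have eq: "e * hs_norm s k * hs_norm s h * hs_norm s \<psi> = e * \<bar>x\<bar> * K2" unfolding kn K2_def by (simp add: power2_eq_square)
    have "\<bar>pr s (DF k h t) \<psi> - al - x * be\<bar> \<le> e * \<bar>x\<bar> * K2" using p1 unfolding p2 eq .
    then show "\<bar>pr s (DF (\<lambda>\<zeta>. x *\<^sub>R h \<zeta>) h t) \<psi> - al - x * be\<bar> \<le> e * \<bar>x\<bar> * K2"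
      unfolding k_def .
  qed
qed

lemma mvt:
  assumes e: "e > 0"
  shows "\<exists>\<epsilon>0>0. \<forall>\<epsilon>. 0 < \<epsilon> \<and> \<epsilon> < \<epsilon>0 \<longrightarrow> \<bar>ff \<epsilon> - \<epsilon> * al - \<epsilon>\<^sup>2 / 2 * be\<bar> \<le> e * \<epsilon>\<^sup>2 * K2"
proof -
  obtain \<delta> where \<delta>: "\<delta> > 0" and g: "\<forall>x. \<bar>x\<bar> < \<delta> \<longrightarrow> \<bar>pr s (DF (\<lambda>\<zeta>. x *\<^sub>R h \<zeta>) h t) \<psi> - al - x * be\<bar> \<le> e * \<bar>x\<bar> * K2"
    using gp[OF e] by blast
  define \<epsilon>0 where "\<epsilon>0 = min \<delta> rho"
  have e0: "\<epsilon>0 > 0" unfolding \<epsilon>0_def using \<delta> rho_pos by simp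
  show ?thesis
  proof (intro exI[of _ \<epsilon>0] conjI allI impI e0)
    fix \<epsilon> assume \<epsilon>: "0 < \<epsilon> \<and> \<epsilon> < \<epsilon>0"
    define G where "G = (\<lambda>z. ff z - z * al - z\<^sup>2 / 2 * be)"
    have dG: "(G has_real_derivative (pr s (DF (\<lambda>\<zeta>. z *\<^sub>R h \<zeta>) h t) \<psi> - al - z * be)) (at z)"
      if "0 \<le> z" "z \<le> \<epsilon>" for z
    proof -
      have zr: "\<bar>z\<bar> < rho" using that \<epsilon> unfolding \<epsilon>0_def by auto
      show ?thesis unfolding G_def using deriv[OF zr] by (auto intro!: derivative_eq_intros)
    qed
    obtain z where z: "0 < z" "z < \<epsilon>" and mv: "G \<epsilon> - G 0 = (\<epsilon> - 0) * (pr s (DF (\<lambda>\<zeta>. z *\<^sub>R h \<zeta>) h t) \<psi> - al - z * be)"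
      using MVT2[of 0 \<epsilon> G "\<lambda>z. pr s (DF (\<lambda>\<zeta>. z *\<^sub>R h \<zeta>) h t) \<psi> - al - z * be"] \<epsilon> dG by blast
    have G0: "G 0 = 0" unfolding G_def ff_def using F0 by simp
    have "\<bar>pr s (DF (\<lambda>\<zeta>. z *\<^sub>R h \<zeta>) h t) \<psi> - al - z * be\<bar> \<le> e * \<bar>z\<bar> * K2"
    proof -
      have "\<bar>z\<bar> < \<delta>" using z \<epsilon> unfolding \<epsilon>0_def by auto
      then show ?thesis using g by blast
    qed
    also have "\<dots> \<le> e * \<epsilon> * K2" using z e K2_nn by (intro mult_right_mono mult_left_mono) auto
    finally have "\<bar>G \<epsilon>\<bar> \<le> \<epsilon> * (e * \<epsilon> * K2)" using mv G0 \<epsilon> by (simp add: abs_mult mult_left_mono)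
    then show "\<bar>ff \<epsilon> - \<epsilon> * al - \<epsilon>\<^sup>2 / 2 * be\<bar> \<le> e * \<epsilon>\<^sup>2 * K2"
      unfolding G_def by (simp add: power2_eq_square algebra_simps)
  qed
qed


lemma hW0: "W 0 h" using hsm Hs_W by blast

lemma V_Ws: "W s (Vf \<eta> h t)"
proof -
  have "W 0 (Vf \<eta> h t)" using Sphi_bound(1)[OF eta _ _ hW0, of t] t unfolding Vf_def by auto
  then show ?thesis using W0_Ws(1) s0 by blast
qed

lemma Q_Ws: "W s (Qf \<eta> h t)"
  using Q_W[OF eta t hW0 Qm Qsi] W0_Ws(1) s0 by blast

lemma pde: "\<exists>\<epsilon>0>0. \<exists>Cp. \<forall>\<epsilon>. 0 < \<epsilon> \<and> \<epsilon> < \<epsilon>0 \<longrightarrow> \<bar>ff \<epsilon> - \<epsilon> * ga + \<epsilon>\<^sup>2 * qq\<bar> \<le> Cp * \<epsilon> ^ 3"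
proof -
  define A where "A = exp (\<eta> * T / 4) * hs_norm 0 h"
  have A: "A > 0" unfolding A_def using h0 by simp
  define KT where "KT = KK \<eta> T"
  have KT: "KT \<ge> 0" unfolding KT_def by (rule KK_nn)
  define \<epsilon>0 where "\<epsilon>0 = min rho (1 / (4 * KT * A + 1))"
  have e0: "\<epsilon>0 > 0" unfolding \<epsilon>0_def using rho_pos KT A by (simp add: add_nonneg_pos)
  define Cp where "Cp = KT * (KT * (4 * A\<^sup>2) * (3 * A)) * hs_norm s \<psi>"
  show ?thesis
  proof (rule exI[of _ \<epsilon>0], rule conjI[OF e0], rule exI[of _ Cp], intro allI impI)
    fix \<epsilon> :: real assume \<epsilon>: "0 < \<epsilon> \<and> \<epsilon> < \<epsilon>0"
    define \<phi> where "\<phi> = (\<lambda>\<zeta>. \<epsilon> *\<^sub>R h \<zeta>)"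
    have er: "\<bar>\<epsilon>\<bar> < rho" using \<epsilon> unfolding \<epsilon>0_def by auto
    have phiH: "\<forall>\<sigma>. \<phi> \<in> Hs \<sigma>" unfolding \<phi>_def using hsm Hs_scaleR by blast
    have phin: "hs_norm s \<phi> < r" unfolding \<phi>_def by (rule small_norm(1)[OF er])
    have ss: "smooth_solution \<eta> T \<phi> (F \<phi>)" using flS phiH phin by blast
    define u where "u = F \<phi>"
    have uC0: "u \<in> CHs T 0" and mild: "mild_solution \<eta> T (\<lambda>\<xi>. \<epsilon> *\<^sub>R h \<xi>) u"
      using ss unfolding smooth_solution_def u_def \<phi>_def by auto
    have uCs: "u \<in> CHs T s" unfolding u_def \<phi>_def by (rule F_C[OF er])
    define a where "a = exp (\<eta> * T / 4) * (\<bar>\<epsilon>\<bar> * hs_norm 0 h)"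
    have aA: "a = \<epsilon> * A" unfolding a_def A_def using \<epsilon> by simp
    have apos: "a > 0" unfolding aA using \<epsilon> A by simp
    have small: "4 * KK \<eta> T * a < 1"
    proof -
      have "4 * KT * A * \<epsilon> \<le> 4 * KT * A * (1 / (4 * KT * A + 1))"
        using \<epsilon> KT A unfolding \<epsilon>0_def by (intro mult_left_mono) auto
      also have "\<dots> < 1" using KT A by (simp add: add_nonneg_pos)
      finally show ?thesis unfolding aA KT_def[symmetric] by (simp add: algebra_simps)
    qed
    have Qm': "(\<lambda>\<xi>. LINT \<tau>:{0..t}|lborel. S0sym \<eta> (t - \<tau>) \<xi> * nonlin (\<lambda>\<tau> \<xi>. S0sym \<eta> \<tau> \<xi> * h \<xi>) \<tau> \<xi>) \<in> borel_measurable lborel"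
      using Qm unfolding Qf_def Vf_def .
    have Qsi': "\<And>\<xi>. set_integrable lborel {0..t} (\<lambda>\<tau>. S0sym \<eta> (t - \<tau>) \<xi> * nonlin (\<lambda>\<tau> \<xi>. S0sym \<eta> \<tau> \<xi> * h \<xi>) \<tau> \<xi>)"
      using Qsi unfolding Vf_def .
    note so = second_order[OF eta T uC0 mild hW0 a_def apos small Qm' Qsi' t]
    define c where "c = (\<lambda>\<xi>. u t \<xi> - \<epsilon> *\<^sub>R Vf \<eta> h t \<xi> + \<epsilon>\<^sup>2 *\<^sub>R Qf \<eta> h t \<xi>)"
    have cW0: "W 0 c" using so(3) unfolding c_def Vf_def Qf_def by simp
    have cb0: "hs_norm 0 c \<le> KT * (KT * (2 * a)\<^sup>2 * (3 * a))" using so(4) unfolding c_def Vf_def Qf_def KT_def by simp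
    have cWs: "W s c" and cbs: "hs_norm s c \<le> hs_norm 0 c" using W0_Ws[OF cW0 s0] by auto
    have uW: "W s (u t)" using CHs_W[OF uCs t] .
    have W1: "W s (\<lambda>\<xi>. \<epsilon> *\<^sub>R Vf \<eta> h t \<xi>)" and W2: "W s (\<lambda>\<xi>. \<epsilon>\<^sup>2 *\<^sub>R Qf \<eta> h t \<xi>)"
      using W_scaleR(1) V_Ws Q_Ws by blast+
    have W12: "W s (\<lambda>\<xi>. u t \<xi> - \<epsilon> *\<^sub>R Vf \<eta> h t \<xi>)" by (rule W_diff[OF uW W1])
    have "pr s c \<psi> = pr s (\<lambda>\<xi>. u t \<xi> - \<epsilon> *\<^sub>R Vf \<eta> h t \<xi>) \<psi> + pr s (\<lambda>\<xi>. \<epsilon>\<^sup>2 *\<^sub>R Qf \<eta> h t \<xi>) \<psi>"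
      unfolding c_def by (rule pr_add[OF W12 W2 psi])
    also have "\<dots> = pr s (u t) \<psi> - pr s (\<lambda>\<xi>. \<epsilon> *\<^sub>R Vf \<eta> h t \<xi>) \<psi> + pr s (\<lambda>\<xi>. \<epsilon>\<^sup>2 *\<^sub>R Qf \<eta> h t \<xi>) \<psi>"
      by (simp only: pr_diff[OF uW W1 psi])
    also have "\<dots> = ff \<epsilon> - \<epsilon> * ga + \<epsilon>\<^sup>2 * qq"
      unfolding pr_scaleR ff_def ga_def qq_def u_def \<phi>_def ..
    finally have pc: "pr s c \<psi> = ff \<epsilon> - \<epsilon> * ga + \<epsilon>\<^sup>2 * qq" .
    have "\<bar>pr s c \<psi>\<bar> \<le> hs_norm s c * hs_norm s \<psi>" by (rule W_pr(2)[OF cWs psi])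
    also have "\<dots> \<le> (KT * (KT * (2 * a)\<^sup>2 * (3 * a))) * hs_norm s \<psi>"
      using cbs cb0 by (intro mult_right_mono) auto
    also have "\<dots> = Cp * \<epsilon> ^ 3" unfolding Cp_def aA by (simp add: power2_eq_square power3_eq_cube algebra_simps)
    finally show "\<bar>ff \<epsilon> - \<epsilon> * ga + \<epsilon>\<^sup>2 * qq\<bar> \<le> Cp * \<epsilon> ^ 3" unfolding pc .
  qed
qed

lemma main_eq: "qq = - be / 2"
proof -
  have "be / 2 + qq = 0"
  proof (rule final_real[of "al - ga"])
    fix e :: real assume e: "e > 0"
    define e1 where "e1 = e / (2 * (K2 + 1))"
    have e1: "e1 > 0" unfolding e1_def using e K2_nn by (simp add: add_nonneg_pos)
    obtain \<epsilon>1 where \<epsilon>1: "\<epsilon>1 > 0" and m: "\<forall>\<epsilon>. 0 < \<epsilon> \<and> \<epsilon> < \<epsilon>1 \<longrightarrow> \<bar>ff \<epsilon> - \<epsilon> * al - \<epsilon>\<^sup>2 / 2 * be\<bar> \<le> e1 * \<epsilon>\<^sup>2 * K2"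
      using mvt[OF e1] by blast
    obtain \<epsilon>2 Cp where \<epsilon>2: "\<epsilon>2 > 0" and p: "\<forall>\<epsilon>. 0 < \<epsilon> \<and> \<epsilon> < \<epsilon>2 \<longrightarrow> \<bar>ff \<epsilon> - \<epsilon> * ga + \<epsilon>\<^sup>2 * qq\<bar> \<le> Cp * \<epsilon> ^ 3"
      using pde by blast
    define \<epsilon>0 where "\<epsilon>0 = min (min \<epsilon>1 \<epsilon>2) (e / (2 * (\<bar>Cp\<bar> + 1)))"
    have e0: "\<epsilon>0 > 0" unfolding \<epsilon>0_def using \<epsilon>1 \<epsilon>2 e by (simp add: add_nonneg_pos)
    show "\<exists>\<epsilon>0>0. \<forall>\<epsilon>. 0 < \<epsilon> \<and> \<epsilon> < \<epsilon>0 \<longrightarrow> \<bar>\<epsilon> * (al - ga) + \<epsilon>\<^sup>2 * (be / 2 + qq)\<bar> \<le> e * \<epsilon>\<^sup>2"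
    proof (intro exI[of _ \<epsilon>0] conjI allI impI e0)
      fix \<epsilon> :: real assume \<epsilon>: "0 < \<epsilon> \<and> \<epsilon> < \<epsilon>0"
      have b1: "\<bar>ff \<epsilon> - \<epsilon> * al - \<epsilon>\<^sup>2 / 2 * be\<bar> \<le> e1 * \<epsilon>\<^sup>2 * K2" using m \<epsilon> unfolding \<epsilon>0_def by auto
      have b2: "\<bar>ff \<epsilon> - \<epsilon> * ga + \<epsilon>\<^sup>2 * qq\<bar> \<le> Cp * \<epsilon> ^ 3" using p \<epsilon> unfolding \<epsilon>0_def by auto
      have b1': "e1 * \<epsilon>\<^sup>2 * K2 \<le> e / 2 * \<epsilon>\<^sup>2"
      proof -
        have "e1 * K2 \<le> e / 2"
        proof -
          have "e1 * K2 \<le> e1 * (K2 + 1)" using e1 by (intro mult_left_mono) auto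
          also have "\<dots> = e / 2"
          proof -
            have "K2 + 1 > 0" using K2_nn by linarith
            then show ?thesis unfolding e1_def by (simp add: field_simps)
          qed
          finally show ?thesis .
        qed
        then have "(e1 * K2) * \<epsilon>\<^sup>2 \<le> (e / 2) * \<epsilon>\<^sup>2" by (intro mult_right_mono) auto
        then show ?thesis by (simp add: algebra_simps)
      qed
      have b2': "Cp * \<epsilon> ^ 3 \<le> e / 2 * \<epsilon>\<^sup>2"
      proof -
        have "\<bar>Cp\<bar> * \<epsilon> \<le> \<bar>Cp\<bar> * (e / (2 * (\<bar>Cp\<bar> + 1)))" using \<epsilon> unfolding \<epsilon>0_def by (intro mult_left_mono) auto
        also have "\<dots> \<le> e / 2"
        proof -
          have "\<bar>Cp\<bar> * (e / (2 * (\<bar>Cp\<bar> + 1))) = (e / 2) * (\<bar>Cp\<bar> / (\<bar>Cp\<bar> + 1))" by (simp add: field_simps)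
          also have "\<dots> \<le> (e / 2) * 1" using e by (intro mult_left_mono) auto
          finally show ?thesis by simp
        qed
        finally have "Cp * \<epsilon> \<le> e / 2" by (smt (verit) abs_ge_self mult_right_mono \<epsilon>)
        then have "(Cp * \<epsilon>) * \<epsilon>\<^sup>2 \<le> (e / 2) * \<epsilon>\<^sup>2" by (intro mult_right_mono) auto
        then show ?thesis by (simp add: power2_eq_square power3_eq_cube algebra_simps)
      qed
      have eq: "\<epsilon> * (al - ga) + \<epsilon>\<^sup>2 * (be / 2 + qq) = (ff \<epsilon> - \<epsilon> * ga + \<epsilon>\<^sup>2 * qq) - (ff \<epsilon> - \<epsilon> * al - \<epsilon>\<^sup>2 / 2 * be)"
        by (simp add: algebra_simps)
      have "\<bar>\<epsilon> * (al - ga) + \<epsilon>\<^sup>2 * (be / 2 + qq)\<bar> \<le> \<bar>ff \<epsilon> - \<epsilon> * ga + \<epsilon>\<^sup>2 * qq\<bar> + \<bar>ff \<epsilon> - \<epsilon> * al - \<epsilon>\<^sup>2 / 2 * be\<bar>"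
        unfolding eq by (rule abs_triangle_ineq4)
      also have "\<dots> \<le> e / 2 * \<epsilon>\<^sup>2 + e / 2 * \<epsilon>\<^sup>2" using b1 b2 b1' b2' by linarith
      finally show "\<bar>\<epsilon> * (al - ga) + \<epsilon>\<^sup>2 * (be / 2 + qq)\<bar> \<le> e * \<epsilon>\<^sup>2" by simp
    qed
  qed
  then show ?thesis by simp
qed

lemma main_eq': "pr s (Qf \<eta> h t) \<psi> = - pr s (D2 h h t) \<psi> / 2"
  using main_eq unfolding qq_def be_def .

end


theorem key:
  fixes \<eta> s T :: real and F :: "(real \<Rightarrow> complex) \<Rightarrow> real \<Rightarrow> real \<Rightarrow> complex"
  assumes eta: "\<eta> > 0" and s0: "s \<le> 0" and T: "T > 0" and fl: "flow_map \<eta> s T F"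
    and tf: "twice_frechet_at_zero s T F"
  shows "\<exists>C. \<forall>h t. (\<forall>\<sigma>. h \<in> Hs \<sigma>) \<longrightarrow> hs_norm 0 h > 0 \<longrightarrow> t \<in> {0..T} \<longrightarrow>
      Qf \<eta> h t \<in> borel_measurable lborel \<longrightarrow>
      (\<forall>\<xi>. set_integrable lborel {0..t} (\<lambda>\<tau>. S0sym \<eta> (t - \<tau>) \<xi> * nonlin (Vf \<eta> h) \<tau> \<xi>)) \<longrightarrow>
      hs_norm s (Qf \<eta> h t) \<le> C * (hs_norm s h)\<^sup>2"
proof -
  obtain r where r: "r > 0" and flC: "\<forall>\<phi>\<in>Hs s. hs_norm s \<phi> < r \<longrightarrow> F \<phi> \<in> CHs T s"
    and flS: "\<forall>\<phi>. (\<forall>\<sigma>. \<phi> \<in> Hs \<sigma>) \<and> hs_norm s \<phi> < r \<longrightarrow>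
               smooth_solution \<eta> T \<phi> (F \<phi>)
             \<and> (\<forall>w. smooth_solution \<eta> T \<phi> w \<longrightarrow>
                    (\<forall>t\<in>{0..T}. hs_norm s (\<lambda>\<xi>. w t \<xi> - F \<phi> t \<xi>) = 0))"
    using fl unfolding flow_map_def by blast
  obtain r' DF D2 where r': "r' > 0" and DFp: "\<forall>\<phi>\<in>Hs s. hs_norm s \<phi> < r' \<longrightarrow> frechet_deriv_at s T F \<phi> (DF \<phi>)"
    and D2b: "\<forall>h\<in>Hs s. bdd_lin_op s T (D2 h)"
    and D2lin: "\<forall>h\<in>Hs s. \<forall>h'\<in>Hs s. \<forall>g\<in>Hs s. \<forall>a b :: real.
           chs_norm T s (\<lambda>t \<xi>. D2 (\<lambda>\<zeta>. a *\<^sub>R h \<zeta> + b *\<^sub>R h' \<zeta>) g t \<xi>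
                                 - (a *\<^sub>R D2 h g t \<xi> + b *\<^sub>R D2 h' g t \<xi>)) = 0"
    and D2C: "\<exists>C. \<forall>h\<in>Hs s. \<forall>g\<in>Hs s. chs_norm T s (D2 h g) \<le> C * hs_norm s h * hs_norm s g"
    and D2ap: "\<forall>\<epsilon>>0. \<exists>\<delta>>0. \<forall>h\<in>Hs s. hs_norm s h < \<delta> \<longrightarrow>
           (\<forall>g\<in>Hs s. chs_norm T s (\<lambda>t \<xi>. DF h g t \<xi> - DF (\<lambda>_. 0) g t \<xi> - D2 h g t \<xi>)
                        \<le> \<epsilon> * hs_norm s h * hs_norm s g)"
    using tf unfolding twice_frechet_at_zero_def by blast
  obtain C2 where C2: "\<forall>h\<in>Hs s. \<forall>g\<in>Hs s. chs_norm T s (D2 h g) \<le> C2 * hs_norm s h * hs_norm s g"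
    using D2C by blast
  show ?thesis
  proof (intro exI[of _ "max C2 0 / 2"] allI impI)
    fix h and t :: real
    assume hsm: "\<forall>\<sigma>. h \<in> Hs \<sigma>" and h0: "hs_norm 0 h > 0" and t: "t \<in> {0..T}"
      and Qm: "Qf \<eta> h t \<in> borel_measurable lborel"
      and Qsi: "\<forall>\<xi>. set_integrable lborel {0..t} (\<lambda>\<tau>. S0sym \<eta> (t - \<tau>) \<xi> * nonlin (Vf \<eta> h) \<tau> \<xi>)"
    have hW0: "W 0 h" using hsm Hs_W by blast
    have hs: "h \<in> Hs s" using hsm by blast
    have QW0: "W 0 (Qf \<eta> h t)" using Q_W[OF eta t hW0 Qm] Qsi by blast
    have psi: "W s (Qf \<eta> h t)" using W0_Ws(1)[OF QW0 s0] .
    have me: "pr s (Qf \<eta> h t) (Qf \<eta> h t) = - pr s (D2 h h t) (Qf \<eta> h t) / 2"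
      by (rule main_eq'[OF eta s0 T r flC flS r' DFp D2b D2lin D2ap hsm h0 t psi Qm]) (use Qsi in blast)
    define q where "q = hs_norm s (Qf \<eta> h t)"
    have DC: "D2 h h \<in> CHs T s" using D2b hs unfolding bdd_lin_op_def by blast
    obtain B where B: "\<forall>t\<in>{0..T}. W s (D2 h h t) \<and> hs_norm s (D2 h h t) \<le> B" using CHs_hs_bdd[OF DC] by blast
    have "hs_norm s (D2 h h t) \<le> chs_norm T s (D2 h h)" by (rule chs_upper[OF _ t]) (use B in blast)
    also have "\<dots> \<le> C2 * hs_norm s h * hs_norm s h" using C2 hs by blast
    also have "\<dots> \<le> max C2 0 * (hs_norm s h)\<^sup>2" by (simp add: power2_eq_square mult_right_mono mult.assoc)
    finally have Db: "hs_norm s (D2 h h t) \<le> max C2 0 * (hs_norm s h)\<^sup>2" .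
    have "q\<^sup>2 = pr s (Qf \<eta> h t) (Qf \<eta> h t)" unfolding q_def using pr_self[OF psi] by simp
    also have "\<dots> \<le> \<bar>pr s (D2 h h t) (Qf \<eta> h t)\<bar> / 2" unfolding me by simp
    also have "\<dots> \<le> hs_norm s (D2 h h t) * q / 2" unfolding q_def using W_pr(2)[OF _ psi, of "D2 h h t"] B t by auto
    also have "\<dots> \<le> max C2 0 * (hs_norm s h)\<^sup>2 * q / 2" using Db by (intro divide_right_mono mult_right_mono) (auto simp: q_def)
    finally have qq: "q * q \<le> (max C2 0 / 2 * (hs_norm s h)\<^sup>2) * q" by (simp add: power2_eq_square algebra_simps)
    show "hs_norm s (Qf \<eta> h t) \<le> max C2 0 / 2 * (hs_norm s h)\<^sup>2"
    proof (cases "q = 0")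
      case True then show ?thesis unfolding q_def by simp
    next
      case False then have "q > 0" using hs_norm_nn unfolding q_def by (metis less_eq_real_def)
      then show ?thesis using qq unfolding q_def by (simp add: mult_le_cancel_right)
    qed
  qed
qed

definition hN :: "real \<Rightarrow> real \<Rightarrow> complex" where
  "hN N \<xi> = indicator {x. N \<le> \<bar>x\<bar> \<and> \<bar>x\<bar> \<le> 2 * N} \<xi>"

definition SN :: "real \<Rightarrow> real set" where "SN N = {x. N \<le> \<bar>x\<bar> \<and> \<bar>x\<bar> \<le> 2 * N}"

lemma hN_SN: "hN N \<xi> = complex_of_real (indicator (SN N) \<xi>)"
  unfolding hN_def SN_def by (simp add: indicator_def)

lemma SN_meas[measurable]: "SN N \<in> sets lborel" unfolding SN_def by measurable

lemma SN_compact: "compact (SN N)"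
proof -
  have "closed (SN N)" unfolding SN_def
    by (intro closed_Collect_conj closed_Collect_le continuous_intros)
  moreover have "bounded (SN N)" unfolding SN_def bounded_iff by (intro exI[of _ "2 * N"]) auto
  ultimately show ?thesis by (simp add: compact_eq_bounded_closed)
qed

lemma hN_meas[measurable]: "hN N \<in> borel_measurable lborel"
  unfolding hN_SN by measurable

lemma hN_Hs: "hN N \<in> Hs \<sigma>"
proof -
  have e: "(\<lambda>\<xi>. (1 + \<xi>\<^sup>2) powr \<sigma> * (cmod (hN N \<xi>))\<^sup>2) = (\<lambda>\<xi>. indicator (SN N) \<xi> *\<^sub>R (1 + \<xi>\<^sup>2) powr \<sigma>)"
    unfolding hN_SN by (auto simp: indicator_def)
  have i: "integrable lborel (\<lambda>\<xi>. indicator (SN N) \<xi> *\<^sub>R (1 + \<xi>\<^sup>2) powr \<sigma>)"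
  proof (rule borel_integrable_compact[OF SN_compact])
    show "continuous_on (SN N) (\<lambda>\<xi>::real. (1 + \<xi>\<^sup>2) powr \<sigma>)"
    proof (intro continuous_intros ballI)
      fix \<xi> :: real have "0 \<le> \<xi>\<^sup>2" by simp
      then show "1 + \<xi>\<^sup>2 \<noteq> 0" by linarith
    qed
  qed
  have i2: "integrable lborel (\<lambda>\<xi>. (1 + \<xi>\<^sup>2) powr \<sigma> * (cmod (hN N \<xi>))\<^sup>2)" unfolding e by (rule i)
  have "AE \<xi> in lborel. hN N (- \<xi>) = cnj (hN N \<xi>)"
    by (intro AE_I2) (simp add: hN_def indicator_def)
  then show ?thesis unfolding Hs_def using i2 by simp
qed

lemma int_ind_const: "a \<le> b \<Longrightarrow> (LINT x|lborel. indicator {a..b} x * (c::real)) = (b - a) * c"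
  by (simp add: mult.commute)

lemma integrable_ind_const: "integrable lborel (\<lambda>x. indicator {a..b::real} x * (c::real))"
  using borel_integrable_atLeastAtMost'[of a b "\<lambda>_. c"] unfolding set_integrable_def
  by (simp add: mult.commute)

lemma hN_norm0_pos:
  assumes N: "N > 0" shows "hs_norm 0 (hN N) > 0"
proof -
  have W: "W 0 (hN N)" using hN_Hs Hs_W by blast
  have i: "integrable lborel (\<lambda>\<xi>. (cmod (hN N \<xi>))\<^sup>2)" using W unfolding W_def by simp
  have "(LINT \<xi>|lborel. indicator {N..2*N} \<xi> * 1) \<le> (LINT \<xi>|lborel. (cmod (hN N \<xi>))\<^sup>2)"
    by (intro integral_mono integrable_ind_const i) (auto simp: hN_def indicator_def)
  then have "N \<le> (hs_norm 0 (hN N))\<^sup>2" unfolding hs_norm_sq using N by simp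
  then show ?thesis using N hs_norm_nn[of 0 "hN N"] by (metis less_le_trans not_le power2_le_imp_le power2_eq_square
        mult_le_0_iff order_antisym)
qed

lemma hN_norm_s:
  assumes N: "N > 0" and s: "s \<le> 0"
  shows "(hs_norm s (hN N))\<^sup>2 \<le> 2 * N * (1 + N\<^sup>2) powr s"
proof -
  have W: "W s (hN N)" using hN_Hs Hs_W by blast
  have i: "integrable lborel (\<lambda>\<xi>. om s \<xi> * (cmod (hN N \<xi>))\<^sup>2)" using W unfolding W_def by simp
  have pt: "om s \<xi> * (cmod (hN N \<xi>))\<^sup>2 \<le> indicator {-2*N..-N} \<xi> * (1 + N\<^sup>2) powr s + indicator {N..2*N} \<xi> * (1 + N\<^sup>2) powr s" for \<xi>
  proof (cases "N \<le> \<bar>\<xi>\<bar> \<and> \<bar>\<xi>\<bar> \<le> 2 * N")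
    case True
    have "om s \<xi> \<le> (1 + N\<^sup>2) powr s" unfolding om_def
    proof (rule powr_mono2'[OF s])
      show "0 < 1 + N\<^sup>2" by (simp add: add_pos_nonneg)
      have "N\<^sup>2 \<le> \<xi>\<^sup>2" using True N by (metis abs_le_square_iff abs_of_pos)
      then show "1 + N\<^sup>2 \<le> 1 + \<xi>\<^sup>2" by simp
    qed
    have c1: "cmod (hN N \<xi>) = 1" using True by (simp add: hN_def indicator_def)
    have c2: "indicator {-2*N..-N} \<xi> + indicator {N..2*N} \<xi> = (1::real)"
      using True N by (cases "\<xi> \<ge> 0") (auto simp: indicator_def)
    have "om s \<xi> * (cmod (hN N \<xi>))\<^sup>2 \<le> (indicator {-2*N..-N} \<xi> + indicator {N..2*N} \<xi>) * (1 + N\<^sup>2) powr s"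
      unfolding c1 c2 using \<open>om s \<xi> \<le> (1 + N\<^sup>2) powr s\<close> by simp
    then show ?thesis by (simp add: distrib_right)
  next
    case False
    then have "hN N \<xi> = 0" by (simp add: hN_def indicator_def)
    moreover have "0 \<le> indicator {-2*N..-N} \<xi> * (1 + N\<^sup>2) powr s + indicator {N..2*N} \<xi> * (1 + N\<^sup>2) powr (s::real)"
      by (intro add_nonneg_nonneg mult_nonneg_nonneg) auto
    ultimately show ?thesis by simp
  qed
  have "(hs_norm s (hN N))\<^sup>2 \<le> (LINT \<xi>|lborel. indicator {-2*N..-N} \<xi> * (1 + N\<^sup>2) powr s + indicator {N..2*N} \<xi> * (1 + N\<^sup>2) powr s)"
    unfolding hs_norm_sq by (intro integral_mono i pt Bochner_Integration.integrable_add integrable_ind_const)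
  also have "\<dots> = N * (1 + N\<^sup>2) powr s + N * (1 + N\<^sup>2) powr s"
    using N by (simp add: Bochner_Integration.integral_add[OF integrable_ind_const integrable_ind_const] mult.commute)
  finally show ?thesis by simp
qed

lemma hN_Qm: "Qf \<eta> (hN N) t \<in> borel_measurable lborel"
  unfolding Qf_def Vf_def hN_def nonlin_def S0sym_def set_lebesgue_integral_def by measurable

lemma hN_Qsi:
  assumes eta: "\<eta> > 0" and t: "t \<in> {0..T}"
  shows "set_integrable lborel {0..t} (\<lambda>\<tau>. S0sym \<eta> (t - \<tau>) \<xi> * nonlin (Vf \<eta> (hN N)) \<tau> \<xi>)"
proof -
  have hW: "W 0 (hN N)" using hN_Hs Hs_W by blast
  define K where "K = exp (\<eta> * T / 4) * (\<bar>\<xi>\<bar> / (4 * pi) * (exp (\<eta> * T / 4) * hs_norm 0 (hN N))\<^sup>2)"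
  have b: "cmod (S0sym \<eta> (t - \<tau>) \<xi> * nonlin (Vf \<eta> (hN N)) \<tau> \<xi>) \<le> K" if "\<tau> \<in> {0..t}" for \<tau>
  proof -
    have tt: "0 \<le> \<tau>" "\<tau> \<le> T" "0 \<le> t - \<tau>" "t - \<tau> \<le> T" using that t by auto
    have V: "W 0 (Vf \<eta> (hN N) \<tau>)" "hs_norm 0 (Vf \<eta> (hN N) \<tau>) \<le> exp (\<eta> * T / 4) * hs_norm 0 (hN N)"
      using Sphi_bound[OF eta tt(1,2) hW] unfolding Vf_def by auto
    have n: "cmod (nonlin (Vf \<eta> (hN N)) \<tau> \<xi>) \<le> \<bar>\<xi>\<bar> / (4 * pi) * (exp (\<eta> * T / 4) * hs_norm 0 (hN N))\<^sup>2"
    proof -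
      have "cmod (nonlin (Vf \<eta> (hN N)) \<tau> \<xi>) \<le> \<bar>\<xi>\<bar> / (4 * pi) * (hs_norm 0 (Vf \<eta> (hN N) \<tau>))\<^sup>2"
        using nonlin_bound[where w="Vf \<eta> (hN N)" and \<tau>=\<tau> and \<xi>=\<xi>] V(1) by blast
      also have "\<dots> \<le> \<bar>\<xi>\<bar> / (4 * pi) * (exp (\<eta> * T / 4) * hs_norm 0 (hN N))\<^sup>2"
        using V(2) by (intro mult_left_mono power_mono) auto
      finally show ?thesis .
    qed
    have "cmod (S0sym \<eta> (t - \<tau>) \<xi> * nonlin (Vf \<eta> (hN N)) \<tau> \<xi>) = cmod (S0sym \<eta> (t - \<tau>) \<xi>) * cmod (nonlin (Vf \<eta> (hN N)) \<tau> \<xi>)"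
      by (rule norm_mult)
    also have "\<dots> \<le> exp (\<eta> * T / 4) * (\<bar>\<xi>\<bar> / (4 * pi) * (exp (\<eta> * T / 4) * hs_norm 0 (hN N))\<^sup>2)"
      using S0_bound[OF eta tt(3,4)] n by (intro mult_mono) auto
    finally show ?thesis unfolding K_def .
  qed
  show ?thesis unfolding set_integrable_def
  proof (rule Bochner_Integration.integrable_bound[OF integrable_ind_const[of 0 t K]])
    show "(\<lambda>\<tau>. indicator {0..t} \<tau> *\<^sub>R (S0sym \<eta> (t - \<tau>) \<xi> * nonlin (Vf \<eta> (hN N)) \<tau> \<xi>)) \<in> borel_measurable lborel"
      unfolding Vf_def hN_def nonlin_def S0sym_def by measurable
    show "AE \<tau> in lborel. norm (indicator {0..t} \<tau> *\<^sub>R (S0sym \<eta> (t - \<tau>) \<xi> * nonlin (Vf \<eta> (hN N)) \<tau> \<xi>)) \<le> norm (indicator {0..t} \<tau> * K)"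
    proof (intro AE_I2)
      fix \<tau>
      have K0: "K \<ge> 0" unfolding K_def by simp
      show "norm (indicator {0..t} \<tau> *\<^sub>R (S0sym \<eta> (t - \<tau>) \<xi> * nonlin (Vf \<eta> (hN N)) \<tau> \<xi>)) \<le> norm (indicator {0..t} \<tau> * K)"
        using b[of \<tau>] K0 by (cases "\<tau> \<in> {0..t}") auto
    qed
  qed
qed

lemma e_lower:
  fixes \<eta> N \<tau> x :: real
  assumes eta: "\<eta> > 0" and \<tau>: "\<tau> \<ge> 0" and x: "\<bar>x\<bar> \<le> 2 * N"
  shows "exp (- \<eta> * (x\<^sup>2 - \<bar>x\<bar>) * \<tau>) \<ge> exp (- 4 * \<eta> * N\<^sup>2 * \<tau>)"
proof -
  have "x\<^sup>2 \<le> (2 * N)\<^sup>2" using x by (metis abs_le_square_iff abs_of_nonneg abs_ge_zero order.trans)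
  then have "x\<^sup>2 - \<bar>x\<bar> \<le> 4 * N\<^sup>2" by (simp add: power_mult_distrib)
  then have "\<eta> * \<tau> * (x\<^sup>2 - \<bar>x\<bar>) \<le> \<eta> * \<tau> * (4 * N\<^sup>2)" using eta \<tau> by (intro mult_left_mono) auto
  then show ?thesis by (simp add: algebra_simps)
qed

lemma conv_lower:
  fixes \<eta> N \<tau> \<xi> :: real
  assumes eta: "\<eta> > 0" and N: "N > 0" and \<tau>: "\<tau> \<ge> 0" and \<xi>: "\<xi> \<in> {N/4..N/2}"
  shows "Re (LINT \<zeta>|lborel. Vf \<eta> (hN N) \<tau> (\<xi> - \<zeta>) * Vf \<eta> (hN N) \<tau> \<zeta>) \<ge> N / 2 * exp (- 8 * \<eta> * N\<^sup>2 * \<tau>)"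
proof -
  define e where "e = (\<lambda>x. exp (- \<eta> * (x\<^sup>2 - \<bar>x\<bar>) * \<tau>) * indicator (SN N) x)"
  have V: "Vf \<eta> (hN N) \<tau> x = complex_of_real (e x)" for x
    unfolding Vf_def S0sym_def e_def hN_SN by (simp add: algebra_simps)
  have hW: "W 0 (hN N)" using hN_Hs Hs_W by blast
  have VW: "W 0 (Vf \<eta> (hN N) \<tau>)" using Sphi_bound(1)[OF eta \<tau> order_refl hW] unfolding Vf_def by simp
  have ic: "integrable lborel (\<lambda>\<zeta>. Vf \<eta> (hN N) \<tau> (\<xi> - \<zeta>) * Vf \<eta> (hN N) \<tau> \<zeta>)" by (rule conv_bound(1)[OF VW VW])
  have i: "integrable lborel (\<lambda>\<zeta>. e (\<xi> - \<zeta>) * e \<zeta>)"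
    using ic unfolding V by (simp flip: of_real_mult add: complex_of_real_integrable_eq)
  have "Re (LINT \<zeta>|lborel. Vf \<eta> (hN N) \<tau> (\<xi> - \<zeta>) * Vf \<eta> (hN N) \<tau> \<zeta>) = (LINT \<zeta>|lborel. e (\<xi> - \<zeta>) * e \<zeta>)"
    unfolding V by (simp flip: of_real_mult)
  also have "\<dots> \<ge> (LINT \<zeta>|lborel. indicator {-3*N/2..-N} \<zeta> * exp (- 8 * \<eta> * N\<^sup>2 * \<tau>))"
  proof (rule integral_mono[OF integrable_ind_const i])
    fix \<zeta> :: real
    show "indicator {-3*N/2..-N} \<zeta> * exp (- 8 * \<eta> * N\<^sup>2 * \<tau>) \<le> e (\<xi> - \<zeta>) * e \<zeta>"
    proof (cases "\<zeta> \<in> {-3*N/2..-N}")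
      case True
      have z1: "\<zeta> \<in> SN N" and z2: "\<xi> - \<zeta> \<in> SN N" using True \<xi> N unfolding SN_def by auto
      have a1: "e \<zeta> \<ge> exp (- 4 * \<eta> * N\<^sup>2 * \<tau>)" unfolding e_def using z1 e_lower[OF eta \<tau>, of \<zeta> N] unfolding SN_def by auto
      have a2: "e (\<xi> - \<zeta>) \<ge> exp (- 4 * \<eta> * N\<^sup>2 * \<tau>)" unfolding e_def using z2 e_lower[OF eta \<tau>, of "\<xi> - \<zeta>" N] unfolding SN_def by auto
      have a3: "0 \<le> e (\<xi> - \<zeta>)" using a2 by (meson exp_ge_zero order_trans)
      have "exp (- 8 * \<eta> * N\<^sup>2 * \<tau>) = exp (- 4 * \<eta> * N\<^sup>2 * \<tau>) * exp (- 4 * \<eta> * N\<^sup>2 * \<tau>)"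
        by (simp flip: exp_add)
      also have "\<dots> \<le> e (\<xi> - \<zeta>) * e \<zeta>" using a1 a2 a3 by (intro mult_mono) auto
      finally show ?thesis using True by simp
    next
      case False
      have "0 \<le> e (\<xi> - \<zeta>) * e \<zeta>" unfolding e_def by simp
      then show ?thesis using False by simp
    qed
  qed
  also have "(LINT \<zeta>|lborel. indicator {-3*N/2..-N} \<zeta> * exp (- 8 * \<eta> * N\<^sup>2 * \<tau>)) = N / 2 * exp (- 8 * \<eta> * N\<^sup>2 * \<tau>)"
    using N by (subst int_ind_const) auto
  finally show ?thesis .
qed

lemma Im_aux: "Im (complex_of_real a * (\<i> * complex_of_real x / complex_of_real b * c)) = a * (x / b) * Re c"
proof (cases "b = 0")
  case True then show ?thesis by simp
next
  case False then show ?thesis by (simp add: Im_divide power2_eq_square field_simps)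
qed

lemma Q_lower:
  fixes \<eta> N \<xi> :: real
  assumes eta: "\<eta> > 0" and N: "N \<ge> 1" and \<xi>: "\<xi> \<in> {N/4..N/2}"
    and si: "set_integrable lborel {0..1/N\<^sup>2} (\<lambda>\<tau>. S0sym \<eta> (1/N\<^sup>2 - \<tau>) \<xi> * nonlin (Vf \<eta> (hN N)) \<tau> \<xi>)"
  shows "cmod (Qf \<eta> (hN N) (1/N\<^sup>2) \<xi>) \<ge> exp (- 9 * \<eta>) / (32 * pi)"
proof -
  define t where "t = 1 / N\<^sup>2"
  have Npos: "N > 0" using N by simp
  have t0: "t > 0" unfolding t_def using Npos by simp
  have Nt: "N\<^sup>2 * t = 1" unfolding t_def using Npos by simp
  define f where "f = (\<lambda>\<tau>. indicator {0..t} \<tau> *\<^sub>R (S0sym \<eta> (t - \<tau>) \<xi> * nonlin (Vf \<eta> (hN N)) \<tau> \<xi>))"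
  have fi: "integrable lborel f" using si unfolding set_integrable_def f_def t_def .
  have Q: "Qf \<eta> (hN N) t \<xi> = (LINT \<tau>|lborel. f \<tau>)" unfolding Qf_def f_def set_lebesgue_integral_def by simp
  define c1 where "c1 = exp (- 9 * \<eta>) * N\<^sup>2 / (32 * pi)"
  have pt: "indicator {0..t} \<tau> * c1 \<le> Im (f \<tau>)" for \<tau>
  proof (cases "\<tau> \<in> {0..t}")
    case False then show ?thesis unfolding f_def by simp
  next
    case True
    have \<tau>: "0 \<le> \<tau>" "\<tau> \<le> t" using True by auto
    define sv where "sv = exp (- \<eta> * (\<xi>\<^sup>2 - \<bar>\<xi>\<bar>) * (t - \<tau>))"
    define cv where "cv = (LINT \<zeta>|lborel. Vf \<eta> (hN N) \<tau> (\<xi> - \<zeta>) * Vf \<eta> (hN N) \<tau> \<zeta>)"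
    have fe: "Im (f \<tau>) = sv * (\<xi> / (4 * pi)) * Re cv"
      unfolding f_def using True by (simp add: S0sym_def nonlin_def sv_def cv_def Im_aux del: of_real_mult)
    have sv: "sv \<ge> exp (- \<eta>)"
    proof -
      have x0: "\<xi> \<ge> 0" using \<xi> Npos by auto
      have "(\<xi>\<^sup>2 - \<bar>\<xi>\<bar>) * (t - \<tau>) \<le> \<xi>\<^sup>2 * (t - \<tau>)" using \<tau> by (intro mult_right_mono) auto
      also have "\<dots> \<le> \<xi>\<^sup>2 * t" using \<tau> by (intro mult_left_mono) auto
      also have "\<dots> \<le> (N / 2)\<^sup>2 * t" using \<xi> x0 t0 by (intro mult_right_mono power_mono) auto
      also have "\<dots> = 1 / 4" using Nt by (simp add: power_divide field_simps)
      finally have "\<eta> * ((\<xi>\<^sup>2 - \<bar>\<xi>\<bar>) * (t - \<tau>)) \<le> \<eta> * (1 / 4)" using eta by (intro mult_left_mono) auto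
      then have k: "\<eta> * ((\<xi>\<^sup>2 - \<bar>\<xi>\<bar>) * (t - \<tau>)) \<le> \<eta>" using eta by linarith
      have "- \<eta> \<le> - \<eta> * (\<xi>\<^sup>2 - \<bar>\<xi>\<bar>) * (t - \<tau>)" using k by (simp add: mult.assoc)
      then show ?thesis unfolding sv_def by simp
    qed
    have cv: "Re cv \<ge> N / 2 * exp (- 8 * \<eta>)"
    proof -
      have "Re cv \<ge> N / 2 * exp (- 8 * \<eta> * N\<^sup>2 * \<tau>)" unfolding cv_def by (rule conv_lower[OF eta Npos \<tau>(1) \<xi>])
      moreover have "exp (- 8 * \<eta> * N\<^sup>2 * \<tau>) \<ge> exp (- 8 * \<eta>)"
      proof -
        have "N\<^sup>2 * \<tau> \<le> N\<^sup>2 * t" using \<tau> by (intro mult_left_mono) auto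
        then have "8 * \<eta> * (N\<^sup>2 * \<tau>) \<le> 8 * \<eta> * 1" using Nt eta by (intro mult_left_mono) auto
        then show ?thesis by (simp add: algebra_simps)
      qed
      ultimately show ?thesis using Npos by (smt (verit) mult_left_mono divide_nonneg_pos)
    qed
    have xp: "\<xi> / (4 * pi) \<ge> N / (16 * pi)" using \<xi> by (simp add: field_simps)
    have "c1 = exp (- \<eta>) * (N / (16 * pi)) * (N / 2 * exp (- 8 * \<eta>))"
      unfolding c1_def by (simp add: power2_eq_square field_simps flip: exp_add)
    also have "\<dots> \<le> sv * (\<xi> / (4 * pi)) * Re cv"
    proof -
      have sv0: "0 \<le> sv" unfolding sv_def by simp
      have x0: "0 \<le> \<xi> / (4 * pi)" using \<xi> Npos by auto
      have a: "exp (- \<eta>) * (N / (16 * pi)) \<le> sv * (\<xi> / (4 * pi))"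
        using sv xp sv0 Npos by (intro mult_mono) auto
      have sx: "0 \<le> sv * (\<xi> / (4 * pi))" using sv0 x0 by (rule mult_nonneg_nonneg)
      show ?thesis by (rule mult_mono[OF a cv sx]) (use Npos in simp)
    qed
    finally show ?thesis unfolding fe using True by simp
  qed
  have "(LINT \<tau>|lborel. indicator {0..t} \<tau> * c1) \<le> (LINT \<tau>|lborel. Im (f \<tau>))"
    by (rule integral_mono[OF integrable_ind_const integrable_Im[OF fi] pt])
  also have "\<dots> = Im (Qf \<eta> (hN N) t \<xi>)" unfolding Q using fi by simp
  also have "\<dots> \<le> cmod (Qf \<eta> (hN N) t \<xi>)" by (rule order_trans[OF abs_ge_self abs_Im_le_cmod])
  finally have "t * c1 \<le> cmod (Qf \<eta> (hN N) t \<xi>)" using t0 by simp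
  moreover have "t * c1 = exp (- 9 * \<eta>) / (32 * pi)" unfolding c1_def t_def using Npos by simp
  ultimately show ?thesis unfolding t_def by simp
qed

lemma Q_norm_lower:
  fixes \<eta> N s T :: real
  assumes eta: "\<eta> > 0" and N: "N \<ge> 1" and s: "s \<le> 0" and tT: "1 / N\<^sup>2 \<le> T"
  shows "N / 4 * (1 + N\<^sup>2) powr s * (exp (- 9 * \<eta>) / (32 * pi))\<^sup>2 \<le> (hs_norm s (Qf \<eta> (hN N) (1 / N\<^sup>2)))\<^sup>2"
proof -
  define t where "t = 1 / N\<^sup>2"
  define c0 where "c0 = exp (- 9 * \<eta>) / (32 * pi)"
  have Npos: "N > 0" using N by simp
  have t: "t \<in> {0..T}" unfolding t_def using tT by simp
  have hW: "W 0 (hN N)" using hN_Hs Hs_W by blast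
  have si: "\<And>\<xi>. set_integrable lborel {0..t} (\<lambda>\<tau>. S0sym \<eta> (t - \<tau>) \<xi> * nonlin (Vf \<eta> (hN N)) \<tau> \<xi>)"
    by (rule hN_Qsi[OF eta t])
  have QW: "W s (Qf \<eta> (hN N) t)" using W0_Ws(1)[OF Q_W[OF eta t hW hN_Qm si] s] .
  have i: "integrable lborel (\<lambda>\<xi>. om s \<xi> * (cmod (Qf \<eta> (hN N) t \<xi>))\<^sup>2)" using QW unfolding W_def by simp
  have pt: "indicator {N/4..N/2} \<xi> * ((1 + N\<^sup>2) powr s * c0\<^sup>2) \<le> om s \<xi> * (cmod (Qf \<eta> (hN N) t \<xi>))\<^sup>2" for \<xi>
  proof (cases "\<xi> \<in> {N/4..N/2}")
    case True
    have o: "(1 + N\<^sup>2) powr s \<le> om s \<xi>" unfolding om_def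
    proof (rule powr_mono2'[OF s])
      show "0 < 1 + \<xi>\<^sup>2" by (simp add: add_pos_nonneg)
      have "\<xi>\<^sup>2 \<le> N\<^sup>2" using True Npos by (intro power_mono) auto
      then show "1 + \<xi>\<^sup>2 \<le> 1 + N\<^sup>2" by simp
    qed
    have q: "c0 \<le> cmod (Qf \<eta> (hN N) t \<xi>)" unfolding t_def c0_def by (rule Q_lower[OF eta N True si[unfolded t_def]])
    have c00: "0 \<le> c0" unfolding c0_def by simp
    have "c0\<^sup>2 \<le> (cmod (Qf \<eta> (hN N) t \<xi>))\<^sup>2" using q c00 by (rule power_mono)
    then have "(1 + N\<^sup>2) powr s * c0\<^sup>2 \<le> om s \<xi> * (cmod (Qf \<eta> (hN N) t \<xi>))\<^sup>2"
      using o by (intro mult_mono) auto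
    then show ?thesis using True by simp
  next
    case False then show ?thesis by simp
  qed
  have "(LINT \<xi>|lborel. indicator {N/4..N/2} \<xi> * ((1 + N\<^sup>2) powr s * c0\<^sup>2)) \<le> (LINT \<xi>|lborel. om s \<xi> * (cmod (Qf \<eta> (hN N) t \<xi>))\<^sup>2)"
    by (rule integral_mono[OF integrable_ind_const i pt])
  also have "\<dots> = (hs_norm s (Qf \<eta> (hN N) t))\<^sup>2" by (simp add: hs_norm_sq)
  finally show ?thesis using Npos unfolding t_def c0_def by (simp add: int_ind_const field_simps)
qed

lemma powr_aux:
  fixes N s :: real
  assumes N: "N > 0" and s: "s \<le> 0"
  shows "N * (1 + N\<^sup>2) powr s \<le> N powr (1 + 2 * s)"
proof -
  have "(1 + N\<^sup>2) powr s \<le> (N\<^sup>2) powr s" by (rule powr_mono2'[OF s]) (use N in auto)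
  also have "(N\<^sup>2) powr s = (N powr 2) powr s" using N by (simp add: powr_numeral)
  also have "\<dots> = N powr (2 * s)" by (simp add: powr_powr)
  finally have "N * (1 + N\<^sup>2) powr s \<le> N * N powr (2 * s)" using N by (intro mult_left_mono) auto
  also have "\<dots> = N powr (1 + 2 * s)" using N by (simp add: powr_add)
  finally show ?thesis .
qed

theorem theorem1p4:
  fixes \<eta> s :: real
  assumes "\<eta> > 0" and "s < - 1 / 2"
  shows "\<not> (\<exists>T>0. \<exists>F. flow_map \<eta> s T F \<and> twice_frechet_at_zero s T F)"
proof
  assume "\<exists>T>0. \<exists>F. flow_map \<eta> s T F \<and> twice_frechet_at_zero s T F"
  then obtain T F where T: "T > 0" and fl: "flow_map \<eta> s T F" and tf: "twice_frechet_at_zero s T F" by blast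
  have eta: "\<eta> > 0" using assms by simp
  have s0: "s \<le> 0" using assms by simp
  obtain C where C: "\<forall>h t. (\<forall>\<sigma>. h \<in> Hs \<sigma>) \<longrightarrow> hs_norm 0 h > 0 \<longrightarrow> t \<in> {0..T} \<longrightarrow>
      Qf \<eta> h t \<in> borel_measurable lborel \<longrightarrow>
      (\<forall>\<xi>. set_integrable lborel {0..t} (\<lambda>\<tau>. S0sym \<eta> (t - \<tau>) \<xi> * nonlin (Vf \<eta> h) \<tau> \<xi>)) \<longrightarrow>
      hs_norm s (Qf \<eta> h t) \<le> C * (hs_norm s h)\<^sup>2"
    using key[OF eta s0 T fl tf] by blast
  define c0 where "c0 = exp (- 9 * \<eta>) / (32 * pi)"
  have c0: "c0 > 0" unfolding c0_def by simp
  define L where "L = c0\<^sup>2 / (16 * C\<^sup>2 + 1)"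
  have L: "L > 0" unfolding L_def using c0 by (simp add: add_nonneg_pos)
  have lim: "((\<lambda>N::real. N powr (1 + 2 * s)) \<longlongrightarrow> 0) at_top"
    by (rule tendsto_neg_powr) (use assms in \<open>auto intro: filterlim_ident\<close>)
  have ev: "eventually (\<lambda>N::real. N powr (1 + 2 * s) < L \<and> max 1 (1 / T) \<le> N) at_top"
    using order_tendstoD(2)[OF lim L] eventually_ge_at_top[of "max 1 (1 / T)"] by (rule eventually_conj)
  then obtain N where Nl: "N powr (1 + 2 * s) < L" and NT: "max 1 (1 / T) \<le> N"
    unfolding eventually_at_top_linorder by blast
  have N1: "N \<ge> 1" and N0: "N > 0" using NT by auto
  have tT: "1 / N\<^sup>2 \<le> T"
  proof -
    have "1 / T \<le> N" using NT by simp
    also have "N \<le> N\<^sup>2" using N1 by (simp add: power2_eq_square)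
    finally have "1 / T \<le> N\<^sup>2" .
    then show ?thesis using T N0 by (simp add: field_simps)
  qed
  have t: "1 / N\<^sup>2 \<in> {0..T}" using tT by simp
  define h where "h = hN N"
  define q where "q = hs_norm s (Qf \<eta> h (1 / N\<^sup>2))"
  define p where "p = (1 + N\<^sup>2) powr s"
  have "1 + N\<^sup>2 > 0" by (simp add: add_pos_nonneg)
  then have p: "p > 0" unfolding p_def by simp
  have up: "q \<le> C * (hs_norm s h)\<^sup>2"
    unfolding q_def h_def using C hN_Hs hN_norm0_pos[OF N0] t hN_Qm hN_Qsi[OF eta t] by blast
  have low: "N / 4 * p * c0\<^sup>2 \<le> q\<^sup>2" unfolding p_def c0_def q_def h_def by (rule Q_norm_lower[OF eta N1 s0 tT])
  have hn: "(hs_norm s h)\<^sup>2 \<le> 2 * N * p" unfolding h_def p_def by (rule hN_norm_s[OF N0 s0])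
  have q0: "0 \<le> q" unfolding q_def by simp
  have "q\<^sup>2 \<le> (C * (hs_norm s h)\<^sup>2)\<^sup>2" by (rule power_mono[OF up q0])
  also have "\<dots> = C\<^sup>2 * ((hs_norm s h)\<^sup>2)\<^sup>2" by (simp add: power_mult_distrib)
  also have "\<dots> \<le> C\<^sup>2 * (2 * N * p)\<^sup>2" using hn by (intro mult_left_mono power_mono) auto
  finally have "N / 4 * p * c0\<^sup>2 \<le> C\<^sup>2 * (2 * N * p)\<^sup>2" using low by linarith
  then have "(N * p / 4) * c0\<^sup>2 \<le> (N * p / 4) * (16 * C\<^sup>2 * (N * p))"
    by (simp add: power2_eq_square algebra_simps)
  then have "c0\<^sup>2 \<le> 16 * (N * (p * C\<^sup>2))" using N0 p by (simp add: mult_le_cancel_left_pos)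
  then have c1: "c0\<^sup>2 \<le> 16 * C\<^sup>2 * (N * p)" by (simp add: algebra_simps)
  have "N * p \<le> N powr (1 + 2 * s)" unfolding p_def by (rule powr_aux[OF N0 s0])
  then have "16 * C\<^sup>2 * (N * p) \<le> 16 * C\<^sup>2 * N powr (1 + 2 * s)" by (intro mult_left_mono) auto
  also have "\<dots> \<le> (16 * C\<^sup>2 + 1) * N powr (1 + 2 * s)" by (simp add: algebra_simps)
  also have "\<dots> < (16 * C\<^sup>2 + 1) * L" using Nl by (intro mult_strict_left_mono) (auto simp: add_nonneg_pos)
  also have "\<dots> = c0\<^sup>2"
  proof -
    have "16 * C\<^sup>2 + 1 > 0" by (simp add: add_nonneg_pos)
    then show ?thesis unfolding L_def by simp
  qed
  finally show False using c1 by simp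
qed

end
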